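(* Let $m<\infty$ and $m_1,\dots,m_m<\infty$. For each $i\in\{1,\dots,m\}$ and $j\in\{1,\dots,m_i\}$ let $(\mathbf X_i,\mathbf Y_{ij})$ be a general correlated source with $n$-th distribution $P_{X_i^n}(x^n)P_{Y_{ij}^n|X_i^n}(y^n|x^n)$ (so all components with the same $i$ share the marginal $\mathbf X_i$). Let $\alpha_{ij}>0$ with $\sum_{i,j}\alpha_{ij}=1$, $\alpha_i=\sum_j\alpha_{ij}$, $\alpha_{j|i}=\alpha_{ij}/\alpha_i$, and let $(\mathbf X,\mathbf Y)$ be the mixture \[P_{X^nY^n}(x^n,y^n)=\sum_{i=1}^m\sum_{j=1}^{m_i}\alpha_{ij}P_{X_i^n}(x^n)P_{Y_{ij}^n|X_i^n}(y^n|x^n)=\sum_{i=1}^m\alpha_iP_{X_i^n}(x^n)\Big[\sum_{j=1}^{m_i}\alpha_{j|i}P_{Y_{ij}^n|X_i^n}(y^n|x^n)\Big].\] Assume every $(\mathbf X_i,\mathbf Y_{ij})$ is uniformly integrable and satisfies the conditional strong converse property, and that $\underline D(\mathbf X_i\Vert\mathbf X_k)>0$ for all $i\ne k$. Then \[\overline H_s(\mathbf X|\mathbf Y)=\sum_{i=1}^m\alpha_i\Big[\max_{j=1,\dots,m_i}H(\mathbf X_i|\mathbf Y_{ij})\Big],\] where $H(\mathbf X_i|\mathbf Y_{ij})=\lim_{n\to\infty}\frac1nH(X_i^n|Y_{ij}^n)$.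
   Context: A general correlated source $\{(X^n,Y^n)\}_{n\ge1}$ is an arbitrary sequence of pairs of random variables on $\mathcal X^n\times\mathcal Y^n$, $\mathcal X,\mathcal Y$ finite or countably infinite (no structural assumptions; marginal probabilities positive). Logs base 2. With $Z_n=\frac1n\log\frac1{P_{X^n|Y^n}(X^n|Y^n)}$: the source is uniformly integrable if $\lim_{u\to\infty}\sup_n\sum_{z:|z|\ge u}P_{Z_n}(z)|z|=0$; it satisfies the conditional strong converse property if $\inf\{\alpha:\lim_n\Pr\{Z_n>\alpha\}=0\}=\sup\{\beta:\lim_n\Pr\{Z_n<\beta\}=0\}$ (for such uniformly integrable sources the limit $\lim_n\frac1nH(X^n|Y^n)$ exists). $\underline D(\mathbf X_i\Vert\mathbf X_k)=\sup\{\beta:\lim_n\Pr\{\frac1n\log\frac{P_{X_i^n}(X_i^n)}{P_{X_k^n}(X_i^n)}<\beta\}=0\}$ with $X_i^n\sim P_{X_i^n}$. For a source with distributions $P_{X^nY^n}$, $x^n$ and $\varepsilon\in(0,1]$: $\overline h^\varepsilon(x^n)=\inf\{a\in\mathbb R:\sum_{y^n:\log(1/P_{X^n|Y^n}(x^n|y^n))>a}P_{Y^n|X^n}(y^n|x^n)\le\varepsilon\}$; $\overline H_s^\varepsilon(X^n|Y^n)=\sum_{x^n}P_{X^n}(x^n)\overline h^\varepsilon(x^n)$; $\overline H_s(\mathbf X|\mathbf Y)=\lim_{\varepsilon\downarrow0}\limsup_n\frac1n\overline H_s^\varepsilon(X^n|Y^n)$. *)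

theory Defs
  imports "HOL-Probability.Probability"
begin

text \<open>A general correlated source is a sequence S :: nat => ('a list * 'b list) pmf;
  S n is the n-th distribution P_{X^n Y^n} (supported on pairs of length-n lists).\<close>

definition condXY :: "('a \<times> 'b) pmf \<Rightarrow> 'a \<Rightarrow> 'b \<Rightarrow> real" where
  "condXY P x y = pmf P (x, y) / pmf (map_pmf snd P) y"

definition Zfun :: "(nat \<Rightarrow> ('a \<times> 'b) pmf) \<Rightarrow> nat \<Rightarrow> ('a \<times> 'b) \<Rightarrow> real" where
  "Zfun S n p = (1 / real n) * log 2 (1 / condXY (S n) (fst p) (snd p))"

definition src_uniformly_integrable :: "(nat \<Rightarrow> ('a \<times> 'b) pmf) \<Rightarrow> bool" where
  "src_uniformly_integrable S \<longleftrightarrow>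
     ((\<lambda>u::real. \<Squnion>n\<in>{1..}. \<integral>\<^sup>+ p. ennreal (if \<bar>Zfun S n p\<bar> \<ge> u then \<bar>Zfun S n p\<bar> else 0)
          \<partial>measure_pmf (S n)) \<longlongrightarrow> 0) at_top"

definition cond_strong_converse :: "(nat \<Rightarrow> ('a \<times> 'b) pmf) \<Rightarrow> bool" where
  "cond_strong_converse S \<longleftrightarrow>
     Inf (ereal ` {a. (\<lambda>n. measure_pmf.prob (S n) {p. Zfun S n p > a}) \<longlonglongrightarrow> 0})
   = Sup (ereal ` {b. (\<lambda>n. measure_pmf.prob (S n) {p. Zfun S n p < b}) \<longlonglongrightarrow> 0})"

definition cond_entropy_n :: "(nat \<Rightarrow> ('a \<times> 'b) pmf) \<Rightarrow> nat \<Rightarrow> real" where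
  "cond_entropy_n S n =
     measure_pmf.expectation (S n) (\<lambda>p. log 2 (1 / condXY (S n) (fst p) (snd p)))"

definition cond_entropy_rate :: "(nat \<Rightarrow> ('a \<times> 'b) pmf) \<Rightarrow> real" where
  "cond_entropy_rate S = lim (\<lambda>n. cond_entropy_n S n / real n)"

definition D_lower :: "(nat \<Rightarrow> 'a pmf) \<Rightarrow> (nat \<Rightarrow> 'a pmf) \<Rightarrow> ereal" where
  "D_lower PI PK = Sup (ereal ` {b. (\<lambda>n. measure_pmf.prob (PI n)
        {x. (1 / real n) * log 2 (pmf (PI n) x / pmf (PK n) x) < b}) \<longlonglongrightarrow> 0})"

text \<open>hbar^eps(x^n): the sum over y of P_{Y|X}(y|x) on the set where log(1/P_{X|Y}(x|y)) > a
  is written as P_{XY}({x} x {y. ...}) / P_X(x).\<close>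
definition hbar :: "('a \<times> 'b) pmf \<Rightarrow> real \<Rightarrow> 'a \<Rightarrow> real" where
  "hbar P \<epsilon> x = Inf {a. measure_pmf.prob P {p. fst p = x \<and> log 2 (1 / condXY P (fst p) (snd p)) > a}
                          / pmf (map_pmf fst P) x \<le> \<epsilon>}"

definition Hs_eps :: "(nat \<Rightarrow> ('a \<times> 'b) pmf) \<Rightarrow> real \<Rightarrow> nat \<Rightarrow> ennreal" where
  "Hs_eps S \<epsilon> n = (\<integral>\<^sup>+ x. ennreal (hbar (S n) \<epsilon> x) \<partial>measure_pmf (map_pmf fst (S n)))"

definition Hs_bar :: "(nat \<Rightarrow> ('a \<times> 'b) pmf) \<Rightarrow> ennreal" where
  "Hs_bar S = Lim (at_right 0) (\<lambda>\<epsilon>::real. limsup (\<lambda>n. ennreal (1 / real n) * Hs_eps S \<epsilon> n))"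

definition joint_src :: "(nat \<Rightarrow> 'a pmf) \<Rightarrow> (nat \<Rightarrow> 'a \<Rightarrow> 'b pmf) \<Rightarrow> nat \<Rightarrow> ('a \<times> 'b) pmf" where
  "joint_src PX W n = bind_pmf (PX n) (\<lambda>x. map_pmf (Pair x) (W n x))"

end

theory Submission
  imports Defs
begin
lemma nn_count_single: "(\<integral>\<^sup>+y'. f y' * indicator {y} y' \<partial>count_space UNIV) = (f y :: ennreal)"
  by (simp add: nn_integral_indicator_singleton)

lemma nn_count_single': "(\<integral>\<^sup>+y'. indicator {y} y' * f y' \<partial>count_space UNIV) = (f y :: ennreal)"
  by (simp add: mult.commute nn_count_single)

lemma nn_pmf_single: "(\<integral>\<^sup>+x'. indicator {x} x' * f x' \<partial>measure_pmf p) = ennreal (pmf p x) * (f x :: ennreal)"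
proof -
  have "(\<integral>\<^sup>+x'. indicator {x} x' * f x' \<partial>measure_pmf p) =
     (\<integral>\<^sup>+x'. (ennreal (pmf p x') * f x') * indicator {x} x' \<partial>count_space UNIV)"
    by (simp add: nn_integral_measure_pmf mult_ac)
  also have "\<dots> = ennreal (pmf p x) * f x" by (rule nn_count_single)
  finally show ?thesis .
qed

lemma pmf_map_snd_nn: "ennreal (pmf (map_pmf snd P) y) = (\<integral>\<^sup>+x. ennreal (pmf P (x,y)) \<partial>count_space UNIV)"
proof -
  have "ennreal (pmf (map_pmf snd P) y) = (\<integral>\<^sup>+p. ennreal (pmf P p) * indicator (snd -` {y}) p \<partial>count_space UNIV)"
    by (simp add: ennreal_pmf_map nn_integral_measure_pmf)
  also have "\<dots> = (\<integral>\<^sup>+x. \<integral>\<^sup>+y'. ennreal (pmf P (x,y')) * indicator {y} y' \<partial>count_space UNIV \<partial>count_space UNIV)"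
    by (subst nn_integral_fst_count_space[symmetric]) (simp add: indicator_def)
  also have "\<dots> = (\<integral>\<^sup>+x. ennreal (pmf P (x,y)) \<partial>count_space UNIV)"
    by (simp add: nn_count_single)
  finally show ?thesis .
qed

lemma pmf_le_map_snd: "pmf P (x,y) \<le> pmf (map_pmf snd P) y"
proof -
  have "pmf P (x,y) = measure_pmf.prob P {(x,y)}" by (simp add: measure_pmf_single)
  also have "\<dots> \<le> measure_pmf.prob P (snd -` {y})"
    by (rule measure_pmf.finite_measure_mono) auto
  finally show ?thesis by (simp add: pmf_map)
qed

lemma pmf_le_map_fst: "pmf P (x,y) \<le> pmf (map_pmf fst P) x"
proof -
  have "pmf P (x,y) = measure_pmf.prob P {(x,y)}" by (simp add: measure_pmf_single)
  also have "\<dots> \<le> measure_pmf.prob P (fst -` {x})"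
    by (rule measure_pmf.finite_measure_mono) auto
  finally show ?thesis by (simp add: pmf_map)
qed

lemma condXY_nonneg: "0 \<le> condXY P x y"
  by (simp add: condXY_def)

lemma condXY_le1: "condXY P x y \<le> 1"
  using pmf_le_map_snd[of P x y] pmf_nonneg[of "map_pmf snd P" y]
  by (auto simp: condXY_def divide_le_eq_1 less_le)

lemma condXY_pos: "pmf P (x,y) > 0 \<Longrightarrow> condXY P x y > 0"
  using pmf_le_map_snd[of P x y] by (simp add: condXY_def)

definition Lf :: "('a \<times> 'b) pmf \<Rightarrow> ('a \<times> 'b) \<Rightarrow> real" where
  "Lf P p = log 2 (1 / condXY P (fst p) (snd p))"

lemma Lf_nonneg: "0 \<le> Lf P p"
proof (cases "condXY P (fst p) (snd p) = 0")
  case True then show ?thesis by (simp add: Lf_def log_def)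
next
  case False
  then have "condXY P (fst p) (snd p) > 0" using condXY_nonneg[of P] by (simp add: less_le)
  moreover have "condXY P (fst p) (snd p) \<le> 1" by (rule condXY_le1)
  ultimately show ?thesis by (simp add: Lf_def)
qed

lemma Zfun_Lf: "Zfun S n p = (1 / real n) * Lf (S n) p"
  by (simp add: Zfun_def Lf_def)

lemma Zfun_nonneg: "0 \<le> Zfun S n p"
  by (simp add: Zfun_Lf Lf_nonneg)

lemma sum_condXY: "(\<integral>\<^sup>+x. ennreal (condXY P x y) \<partial>count_space UNIV) \<le> 1"
proof (cases "pmf (map_pmf snd P) y = 0")
  case True
  then show ?thesis by (simp add: condXY_def)
next
  case False
  then have pos: "pmf (map_pmf snd P) y > 0" by (simp add: less_le)
  have "(\<integral>\<^sup>+x. ennreal (condXY P x y) \<partial>count_space UNIV) =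
      (\<integral>\<^sup>+x. ennreal (pmf P (x,y)) * ennreal (1 / pmf (map_pmf snd P) y) \<partial>count_space UNIV)"
    by (simp add: condXY_def ennreal_mult[symmetric] divide_inverse)
  also have "\<dots> = ennreal (pmf (map_pmf snd P) y) * ennreal (1 / pmf (map_pmf snd P) y)"
    by (simp add: nn_integral_multc pmf_map_snd_nn)
  also have "\<dots> = 1" using pos by (simp add: ennreal_mult[symmetric])
  finally show ?thesis by simp
qed

lemma pmf_map_Pair: "pmf (map_pmf (Pair x') q) (x,y) = (if x' = x then pmf q y else 0)"
proof (cases "x' = x")
  case True
  then show ?thesis by (simp add: pmf_map_inj' inj_on_def)
next
  case False
  then have "(x,y) \<notin> set_pmf (map_pmf (Pair x') q)" by auto
  then show ?thesis using False by (simp add: set_pmf_eq)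
qed

lemma pmf_joint: "pmf (joint_src PX W n) (x,y) = pmf (PX n) x * pmf (W n x) y"
proof -
  have "pmf (joint_src PX W n) (x,y) = measure_pmf.expectation (PX n) (\<lambda>x'. if x' = x then pmf (W n x) y else 0)"
    unfolding joint_src_def pmf_bind by (simp add: pmf_map_Pair if_distrib cong: if_cong)
  also have "\<dots> = pmf (PX n) x * pmf (W n x) y"
    by (subst integral_measure_pmf_real[where A="{x}"]) (auto split: if_splits)
  finally show ?thesis .
qed

lemma map_fst_joint: "map_pmf fst (joint_src PX W n) = PX n"
  unfolding joint_src_def map_bind_pmf by (simp add: pmf.map_comp o_def bind_return_pmf')

lemma emeasure_joint: "emeasure (measure_pmf (joint_src PX W n)) A =
   (\<integral>\<^sup>+x. emeasure (measure_pmf (W n x)) (Pair x -` A) \<partial>measure_pmf (PX n))"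
  unfolding joint_src_def emeasure_bind_pmf emeasure_map_pmf ..

lemma emeasure_joint_fst: "emeasure (measure_pmf (joint_src PX W n)) {p. fst p = x \<and> Q p} =
   ennreal (pmf (PX n) x) * emeasure (measure_pmf (W n x)) {y. Q (x,y)}"
proof -
  have "emeasure (measure_pmf (joint_src PX W n)) {p. fst p = x \<and> Q p} =
    (\<integral>\<^sup>+x'. indicator {x} x' * emeasure (measure_pmf (W n x')) {y. Q (x',y)} \<partial>measure_pmf (PX n))"
    unfolding emeasure_joint by (rule nn_integral_cong) (auto simp: indicator_def)
  also have "\<dots> = ennreal (pmf (PX n) x) * emeasure (measure_pmf (W n x)) {y. Q (x,y)}"
    by (rule nn_pmf_single)
  finally show ?thesis .
qed

lemma prob_joint_fst: "measure_pmf.prob (joint_src PX W n) {p. fst p = x \<and> Q p} =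
   pmf (PX n) x * measure_pmf.prob (W n x) {y. Q (x,y)}"
  using emeasure_joint_fst[of PX W n x Q]
  by (simp add: measure_pmf.emeasure_eq_measure ennreal_mult[symmetric])

lemma nn_integral_mix:
  assumes "finite (set_pmf \<alpha>)"
  shows "(\<integral>\<^sup>+p. f p \<partial>measure_pmf (bind_pmf \<alpha> J)) = (\<Sum>c\<in>set_pmf \<alpha>. ennreal (pmf \<alpha> c) * (\<integral>\<^sup>+p. f p \<partial>measure_pmf (J c)))"
  unfolding nn_integral_bind_pmf
  by (subst nn_integral_measure_pmf_finite[OF assms]) (auto simp: mult.commute)

lemma emeasure_mix:
  assumes "finite (set_pmf \<alpha>)"
  shows "emeasure (measure_pmf (bind_pmf \<alpha> J)) A = (\<Sum>c\<in>set_pmf \<alpha>. ennreal (pmf \<alpha> c) * emeasure (measure_pmf (J c)) A)"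
  unfolding emeasure_bind_pmf
  by (subst nn_integral_measure_pmf_finite[OF assms]) (auto simp: mult.commute)

lemma prob_mix:
  assumes "finite (set_pmf \<alpha>)"
  shows "measure_pmf.prob (bind_pmf \<alpha> J) A = (\<Sum>c\<in>set_pmf \<alpha>. pmf \<alpha> c * measure_pmf.prob (J c) A)"
proof -
  have "ennreal (measure_pmf.prob (bind_pmf \<alpha> J) A) = ennreal (\<Sum>c\<in>set_pmf \<alpha>. pmf \<alpha> c * measure_pmf.prob (J c) A)"
    using emeasure_mix[OF assms, of J A]
    by (simp add: measure_pmf.emeasure_eq_measure ennreal_mult[symmetric] sum_nonneg)
  then show ?thesis by (simp add: sum_nonneg)
qed

lemma pmf_mix:
  assumes "finite (set_pmf \<alpha>)"
  shows "pmf (bind_pmf \<alpha> J) p = (\<Sum>c\<in>set_pmf \<alpha>. pmf \<alpha> c * pmf (J c) p)"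
  using prob_mix[OF assms, of J "{p}"] by (simp add: measure_pmf_single)

definition cp :: "('a \<times> 'b) pmf \<Rightarrow> 'a \<Rightarrow> real \<Rightarrow> real" where
  "cp P x a = measure_pmf.prob P {p. fst p = x \<and> a < Lf P p} / pmf (map_pmf fst P) x"

lemma hbar_cp: "hbar P \<epsilon> x = Inf {a. cp P x a \<le> \<epsilon>}"
  unfolding hbar_def cp_def Lf_def ..

lemma cp_neg: assumes "a < 0" "0 < pmf (map_pmf fst P) x" shows "cp P x a = 1"
proof -
  have "{p. fst p = x \<and> a < Lf P p} = fst -` {x}"
    using assms Lf_nonneg[of P] by (auto intro: less_le_trans)
  then show ?thesis using assms by (simp add: cp_def pmf_map)
qed

lemma cp_mono: "a \<le> b \<Longrightarrow> cp P x b \<le> cp P x a"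
  unfolding cp_def
  by (intro divide_right_mono measure_pmf.finite_measure_mono) auto

lemma cp_exists: assumes "0 < \<epsilon>" "0 < pmf (map_pmf fst P) x" shows "\<exists>a. cp P x a \<le> \<epsilon>"
proof -
  define A where "A k = {p. fst p = x \<and> real k < Lf P p}" for k :: nat
  have "(\<lambda>k. measure_pmf.prob P (A k)) \<longlonglongrightarrow> measure_pmf.prob P (\<Inter> (range A))"
    by (rule measure_pmf.finite_Lim_measure_decseq) (auto simp: A_def monotone_on_def)
  moreover have "\<Inter> (range A) = {}"
  proof -
    have "p \<notin> A (nat \<lceil>Lf P p\<rceil>)" for p by (auto simp: A_def) linarith
    then show ?thesis by auto
  qed
  ultimately have "(\<lambda>k. measure_pmf.prob P (A k)) \<longlonglongrightarrow> 0" by simp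
  moreover have "0 < \<epsilon> * pmf (map_pmf fst P) x" using assms by simp
  ultimately have "eventually (\<lambda>k. measure_pmf.prob P (A k) < \<epsilon> * pmf (map_pmf fst P) x) sequentially"
    by (rule order_tendstoD)
  then obtain k where "measure_pmf.prob P (A k) < \<epsilon> * pmf (map_pmf fst P) x"
    by (auto dest: eventually_happens)
  then have "cp P x (real k) \<le> \<epsilon>" using assms
    by (simp add: cp_def A_def pos_divide_le_eq)
  then show ?thesis by blast
qed

lemma hbar_le:
  assumes "cp P x a \<le> \<epsilon>" "\<epsilon> < 1" "0 < pmf (map_pmf fst P) x"
  shows "hbar P \<epsilon> x \<le> a"
  unfolding hbar_cp
proof (rule cInf_lower)
  show "a \<in> {a. cp P x a \<le> \<epsilon>}" using assms by simp
  show "bdd_below {a. cp P x a \<le> \<epsilon>}"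
  proof (rule bdd_belowI)
    fix b assume "b \<in> {a. cp P x a \<le> \<epsilon>}"
    then show "0 \<le> b" using cp_neg[of b P x] assms by (cases "b < 0") auto
  qed
qed

lemma hbar_ge:
  assumes "\<epsilon> < cp P x a" "0 < \<epsilon>" "0 < pmf (map_pmf fst P) x"
  shows "a \<le> hbar P \<epsilon> x"
  unfolding hbar_cp
proof (rule cInf_greatest)
  show "{a. cp P x a \<le> \<epsilon>} \<noteq> {}" using cp_exists[OF assms(2,3)] by auto
  fix b assume "b \<in> {a. cp P x a \<le> \<epsilon>}"
  then show "a \<le> b" using cp_mono[of b a P x] assms by (cases "b < a") auto
qed

lemma hbar_nonneg:
  assumes "0 < \<epsilon>" "\<epsilon> < 1" "0 < pmf (map_pmf fst P) x"
  shows "0 \<le> hbar P \<epsilon> x"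
  unfolding hbar_cp
proof (rule cInf_greatest)
  show "{a. cp P x a \<le> \<epsilon>} \<noteq> {}" using cp_exists[OF assms(1,3)] by auto
  fix b assume "b \<in> {a. cp P x a \<le> \<epsilon>}"
  then show "0 \<le> b" using cp_neg[of b P x] assms by (cases "b < 0") auto
qed

lemma hbar_markov:
  assumes "0 < \<epsilon>" "\<epsilon> < 1" "0 < pmf (map_pmf fst P) x"
  shows "ennreal (\<epsilon> * pmf (map_pmf fst P) x * hbar P \<epsilon> x)
     \<le> (\<integral>\<^sup>+p. indicator {p. fst p = x} p * ennreal (Lf P p) \<partial>measure_pmf P)"
    (is "_ \<le> ?I")
proof -
  define c where "c = \<epsilon> * pmf (map_pmf fst P) x"
  have c: "0 < c" using assms by (simp add: c_def)
  define h where "h = hbar P \<epsilon> x"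
  have h0: "0 \<le> h" using hbar_nonneg[OF assms] by (simp add: h_def)
  have key: "ennreal (c * a) \<le> ?I" if a: "0 < a" "a < h" for a
  proof -
    have "\<not> cp P x a \<le> \<epsilon>" using hbar_le[of P x a \<epsilon>] assms a by (auto simp: h_def)
    then have "c < measure_pmf.prob P {p. fst p = x \<and> a < Lf P p}"
      using assms by (simp add: cp_def c_def pos_divide_le_eq mult.commute)
    then have "ennreal (c * a) \<le> ennreal a * emeasure (measure_pmf P) {p. fst p = x \<and> a < Lf P p}"
      using a c by (simp add: measure_pmf.emeasure_eq_measure ennreal_mult[symmetric] mult.commute)
    also have "\<dots> = (\<integral>\<^sup>+p. ennreal a * indicator {p. fst p = x \<and> a < Lf P p} p \<partial>measure_pmf P)"
      by (simp add: nn_integral_cmult)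
    also have "\<dots> \<le> ?I"
      by (rule nn_integral_mono) (auto simp: indicator_def intro: ennreal_leI)
    finally show ?thesis .
  qed
  show ?thesis
  proof (cases "h = 0")
    case True then show ?thesis by (simp add: h_def)
  next
    case False
    with h0 have hp: "0 < h" by simp
    show ?thesis
    proof (cases "?I = \<top>")
      case True then show ?thesis by simp
    next
      case False
      have "c * h \<le> enn2real ?I"
      proof (rule dense_le_bounded[of 0])
        show "0 < c * h" using c hp by simp
        fix w assume w: "0 < w" "w < c * h"
        have "ennreal (c * (w / c)) \<le> ?I"
          using key[of "w / c"] w c by (simp add: pos_divide_less_eq mult.commute)
        then show "w \<le> enn2real ?I" using c False
          by (simp add: ennreal_le_iff2 enn2real_le) (metis enn2real_ennreal ennreal_le_iff enn2real_mono less_top w(1) less_imp_le)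
      qed
      then have "ennreal (c * h) \<le> ennreal (enn2real ?I)" by (rule ennreal_leI)
      moreover have "ennreal (enn2real ?I) = ?I" using False by (simp add: less_top)
      ultimately show ?thesis by (simp add: c_def h_def)
    qed
  qed
qed

lemma ennreal_small_real: assumes "0 < (a::ennreal)" obtains d where "0 < d" "ennreal d < a"
proof -
  obtain b :: ennreal where b: "0 < b" "b < a" using dense[OF assms] by blast
  then have "b < \<top>" using top_greatest[of a] by (meson order.strict_trans2)
  then have "ennreal (enn2real b) = b" by simp
  moreover have "0 < enn2real b" using b \<open>b < \<top>\<close> by (simp add: enn2real_positive_iff)
  ultimately show ?thesis using that b by metis
qed

lemma ennreal_tendsto0I:
  assumes "\<And>d. 0 < d \<Longrightarrow> eventually (\<lambda>n. f n \<le> ennreal d) F"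
  shows "(f \<longlongrightarrow> (0::ennreal)) F"
proof (rule order_tendstoI)
  fix a :: ennreal assume "a < 0" then show "eventually (\<lambda>n. a < f n) F" by simp
next
  fix a :: ennreal assume "0 < a"
  then obtain d where d: "0 < d" "ennreal d < a" by (rule ennreal_small_real)
  show "eventually (\<lambda>n. f n < a) F"
    using assms[OF d(1)] by eventually_elim (use d in auto)
qed

lemma UI_bound:
  assumes "src_uniformly_integrable S" "0 < d"
  shows "\<exists>u>0. \<forall>n\<ge>1. (\<integral>\<^sup>+p. ennreal (if u \<le> \<bar>Zfun S n p\<bar> then \<bar>Zfun S n p\<bar> else 0) \<partial>measure_pmf (S n)) < ennreal d"
proof -
  have "eventually (\<lambda>u. (\<Squnion>n\<in>{1..}. \<integral>\<^sup>+ p. ennreal (if \<bar>Zfun S n p\<bar> \<ge> u then \<bar>Zfun S n p\<bar> else 0)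
          \<partial>measure_pmf (S n)) < ennreal d) at_top"
    using assms unfolding src_uniformly_integrable_def by (intro order_tendstoD) auto
  then obtain N where N: "\<And>u. u \<ge> N \<Longrightarrow> (\<Squnion>n\<in>{1..}. \<integral>\<^sup>+ p. ennreal (if \<bar>Zfun S n p\<bar> \<ge> u then \<bar>Zfun S n p\<bar> else 0)
          \<partial>measure_pmf (S n)) < ennreal d"
    by (auto simp: eventually_at_top_linorder)
  define u where "u = max N 1"
  have "(\<integral>\<^sup>+p. ennreal (if u \<le> \<bar>Zfun S n p\<bar> then \<bar>Zfun S n p\<bar> else 0) \<partial>measure_pmf (S n)) < ennreal d"
    if "n \<ge> 1" for n
    using that N[of u] unfolding u_def
    by (meson SUP_upper atLeast_iff le_less_trans max.cobounded1)
  then show ?thesis by (intro exI[of _ u]) (auto simp: u_def)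
qed

lemma UI_small:
  assumes UI: "src_uniformly_integrable S"
    and E: "(\<lambda>n. measure_pmf.prob (S n) (E n)) \<longlonglongrightarrow> 0"
  shows "(\<lambda>n. \<integral>\<^sup>+p. ennreal (Zfun S n p) * indicator (E n) p \<partial>measure_pmf (S n)) \<longlonglongrightarrow> 0"
proof (rule ennreal_tendsto0I)
  fix d :: real assume d: "0 < d"
  obtain u where u: "u > 0" "\<And>n. n \<ge> 1 \<Longrightarrow> (\<integral>\<^sup>+p. ennreal (if u \<le> \<bar>Zfun S n p\<bar> then \<bar>Zfun S n p\<bar> else 0) \<partial>measure_pmf (S n)) < ennreal (d/2)"
    using UI_bound[OF UI, of "d/2"] d by auto
  have "eventually (\<lambda>n. measure_pmf.prob (S n) (E n) < d / (2*u)) sequentially"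
    using E d u by (intro order_tendstoD) auto
  moreover have "eventually (\<lambda>n. n \<ge> 1) sequentially" by (rule eventually_ge_at_top)
  ultimately show "eventually (\<lambda>n. (\<integral>\<^sup>+p. ennreal (Zfun S n p) * indicator (E n) p \<partial>measure_pmf (S n)) \<le> ennreal d) sequentially"
  proof eventually_elim
    case (elim n)
    have "(\<integral>\<^sup>+p. ennreal (Zfun S n p) * indicator (E n) p \<partial>measure_pmf (S n)) \<le>
        (\<integral>\<^sup>+p. ennreal u * indicator (E n) p + ennreal (if u \<le> \<bar>Zfun S n p\<bar> then \<bar>Zfun S n p\<bar> else 0) \<partial>measure_pmf (S n))"
      using Zfun_nonneg[of S n] by (intro nn_integral_mono) (auto simp: indicator_def intro: ennreal_leI)
    also have "\<dots> = ennreal u * emeasure (measure_pmf (S n)) (E n) +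
        (\<integral>\<^sup>+p. ennreal (if u \<le> \<bar>Zfun S n p\<bar> then \<bar>Zfun S n p\<bar> else 0) \<partial>measure_pmf (S n))"
      by (simp add: nn_integral_add nn_integral_cmult)
    also have "\<dots> \<le> ennreal (d/2) + ennreal (d/2)"
    proof (rule add_mono)
      have "u * measure_pmf.prob (S n) (E n) \<le> d/2"
        using elim u by (simp add: pos_less_divide_eq mult.commute)
      moreover have "ennreal u * emeasure (measure_pmf (S n)) (E n) = ennreal (u * measure_pmf.prob (S n) (E n))"
        using u by (simp add: measure_pmf.emeasure_eq_measure ennreal_mult)
      ultimately show "ennreal u * emeasure (measure_pmf (S n)) (E n) \<le> ennreal (d/2)"
        by (simp add: ennreal_leI)
      show "(\<integral>\<^sup>+p. ennreal (if u \<le> \<bar>Zfun S n p\<bar> then \<bar>Zfun S n p\<bar> else 0) \<partial>measure_pmf (S n)) \<le> ennreal (d/2)"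
        using u(2)[OF elim(2)] by simp
    qed
    also have "\<dots> = ennreal d" using d by (simp add: ennreal_plus[symmetric] del: ennreal_plus)
    finally show ?case .
  qed
qed

lemma UI_bounded:
  assumes UI: "src_uniformly_integrable S"
  shows "\<exists>K. \<forall>n\<ge>1. (\<integral>\<^sup>+p. ennreal (Zfun S n p) \<partial>measure_pmf (S n)) \<le> ennreal K"
proof -
  obtain u where u: "u > 0" "\<And>n. n \<ge> 1 \<Longrightarrow> (\<integral>\<^sup>+p. ennreal (if u \<le> \<bar>Zfun S n p\<bar> then \<bar>Zfun S n p\<bar> else 0) \<partial>measure_pmf (S n)) < ennreal 1"
    using UI_bound[OF UI, of 1] by auto
  have "(\<integral>\<^sup>+p. ennreal (Zfun S n p) \<partial>measure_pmf (S n)) \<le> ennreal (u + 1)" if n: "n \<ge> 1" for n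
  proof -
    have "(\<integral>\<^sup>+p. ennreal (Zfun S n p) \<partial>measure_pmf (S n)) \<le>
        (\<integral>\<^sup>+p. ennreal u + ennreal (if u \<le> \<bar>Zfun S n p\<bar> then \<bar>Zfun S n p\<bar> else 0) \<partial>measure_pmf (S n))"
      using Zfun_nonneg[of S n] by (intro nn_integral_mono) (auto intro: ennreal_leI)
    also have "\<dots> = ennreal u + (\<integral>\<^sup>+p. ennreal (if u \<le> \<bar>Zfun S n p\<bar> then \<bar>Zfun S n p\<bar> else 0) \<partial>measure_pmf (S n))"
      by (simp add: nn_integral_add measure_pmf.emeasure_space_1)
    also have "\<dots> \<le> ennreal u + ennreal 1" using u(2)[OF n] by (intro add_mono) auto
    also have "ennreal u + ennreal 1 = ennreal (u+1)" by (rule ennreal_plus[symmetric]) (use u in auto)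
    finally show ?thesis .
  qed
  then show ?thesis by blast
qed

lemma prob_not: "measure_pmf.prob P {p. \<not> Q p} = 1 - measure_pmf.prob P {p. Q p}"
proof -
  have "{p. \<not> Q p} = space (measure_pmf P) - {p. Q p}" by auto
  then show ?thesis using measure_pmf.prob_compl[of "{p. Q p}" P] by simp
qed

lemma tendsto0_sandwich_prob:
  assumes "(\<lambda>n. measure_pmf.prob (P n) (B n)) \<longlonglongrightarrow> 0" "\<And>n. A n \<subseteq> B n"
  shows "(\<lambda>n. measure_pmf.prob (P n) (A n)) \<longlonglongrightarrow> 0"
proof (rule tendsto_sandwich[OF _ _ tendsto_const assms(1)])
  show "eventually (\<lambda>n. 0 \<le> measure_pmf.prob (P n) (A n)) sequentially" by simp
  show "eventually (\<lambda>n. measure_pmf.prob (P n) (A n) \<le> measure_pmf.prob (P n) (B n)) sequentially"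
    using assms(2) by (intro always_eventually allI measure_pmf.finite_measure_mono) auto
qed

lemma cond_entropy_n_nn:
  "cond_entropy_n S n = enn2real (\<integral>\<^sup>+p. ennreal (Lf (S n) p) \<partial>measure_pmf (S n))"
  unfolding cond_entropy_n_def Lf_def[symmetric]
  by (subst integral_eq_nn_integral) (auto simp: Lf_nonneg Lf_nonneg[unfolded Lf_def] intro!: AE_I2)

lemma cond_entropy_n_div:
  assumes "n \<ge> 1"
  shows "cond_entropy_n S n / real n = enn2real (\<integral>\<^sup>+p. ennreal (Zfun S n p) \<partial>measure_pmf (S n))"
proof -
  have "(\<integral>\<^sup>+p. ennreal (Zfun S n p) \<partial>measure_pmf (S n)) =
      ennreal (1 / real n) * (\<integral>\<^sup>+p. ennreal (Lf (S n) p) \<partial>measure_pmf (S n))"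
  proof -
    have "\<And>p. ennreal (Zfun S n p) = ennreal (1/real n) * ennreal (Lf (S n) p)"
      by (subst ennreal_mult[symmetric]) (auto simp: Zfun_Lf Lf_nonneg)
    then show ?thesis by (simp add: nn_integral_cmult)
  qed
  then show ?thesis using assms by (simp add: cond_entropy_n_nn enn2real_mult)
qed

lemma entropy_spec:
  assumes UI: "src_uniformly_integrable S" and SC: "cond_strong_converse S"
  shows "\<exists>H\<ge>0. (\<forall>\<gamma>>0. (\<lambda>n. measure_pmf.prob (S n) {p. H + \<gamma> < Zfun S n p}) \<longlonglongrightarrow> 0)
     \<and> (\<forall>\<gamma>>0. (\<lambda>n. measure_pmf.prob (S n) {p. Zfun S n p < H - \<gamma>}) \<longlonglongrightarrow> 0)
     \<and> cond_entropy_rate S = H"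
proof -
  define Bs where "Bs = {b. (\<lambda>n. measure_pmf.prob (S n) {p. Zfun S n p < b}) \<longlonglongrightarrow> 0}"
  define As where "As = {a. (\<lambda>n. measure_pmf.prob (S n) {p. Zfun S n p > a}) \<longlonglongrightarrow> 0}"
  have down: "b' \<in> Bs" if "b \<in> Bs" "b' \<le> b" for b b'
  proof -
    have "(\<lambda>n. measure_pmf.prob (S n) {p. Zfun S n p < b}) \<longlonglongrightarrow> 0" using that(1) by (simp add: Bs_def)
    then have "(\<lambda>n. measure_pmf.prob (S n) {p. Zfun S n p < b'}) \<longlonglongrightarrow> 0"
      by (rule tendsto0_sandwich_prob) (use that(2) in auto)
    then show ?thesis by (simp add: Bs_def)
  qed
  have up: "a' \<in> As" if "a \<in> As" "a \<le> a'" for a a'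
  proof -
    have "(\<lambda>n. measure_pmf.prob (S n) {p. Zfun S n p > a}) \<longlonglongrightarrow> 0" using that(1) by (simp add: As_def)
    then have "(\<lambda>n. measure_pmf.prob (S n) {p. Zfun S n p > a'}) \<longlonglongrightarrow> 0"
      by (rule tendsto0_sandwich_prob) (use that(2) in auto)
    then show ?thesis by (simp add: As_def)
  qed
  have e0: "{p. Zfun S n p < 0} = {}" for n using Zfun_nonneg[of S n] by (auto simp: not_less)
  have "0 \<in> Bs" unfolding Bs_def mem_Collect_eq e0 by simp
  obtain K where K: "\<And>n. n \<ge> 1 \<Longrightarrow> (\<integral>\<^sup>+p. ennreal (Zfun S n p) \<partial>measure_pmf (S n)) \<le> ennreal K"
    using UI_bounded[OF UI] by blast
  have fin: "Sup (ereal ` Bs) \<noteq> \<infinity>"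
  proof
    assume inf: "Sup (ereal ` Bs) = \<infinity>"
    define b where "b = 2 * \<bar>K\<bar> + 2"
    have "ereal b < Sup (ereal ` Bs)" using inf by simp
    then obtain b' where "b' \<in> Bs" "b < b'" by (auto simp: less_SUP_iff)
    then have "b \<in> Bs" using down[of b' b] by simp
    then have "eventually (\<lambda>n. measure_pmf.prob (S n) {p. Zfun S n p < b} < 1/2) sequentially"
      unfolding Bs_def by (intro order_tendstoD) auto
    moreover have "eventually (\<lambda>n. n \<ge> 1) sequentially" by (rule eventually_ge_at_top)
    ultimately have "eventually (\<lambda>n. measure_pmf.prob (S n) {p. Zfun S n p < b} < 1/2 \<and> n \<ge> 1) sequentially"
      by (rule eventually_conj)
    then obtain N where N: "\<And>n. n \<ge> N \<Longrightarrow> measure_pmf.prob (S n) {p. Zfun S n p < b} < 1/2 \<and> n \<ge> 1"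
      unfolding eventually_sequentially by blast
    define n where "n = N"
    have n: "measure_pmf.prob (S n) {p. Zfun S n p < b} < 1/2" "n \<ge> 1" using N[of N] by (auto simp: n_def)
    define X where "X = b * (1 - measure_pmf.prob (S n) {p. Zfun S n p < b})"
    have "ennreal X =
        ennreal b * emeasure (measure_pmf (S n)) {p. \<not> Zfun S n p < b}"
      by (simp add: X_def measure_pmf.emeasure_eq_measure prob_not ennreal_mult b_def)
    also have "\<dots> = (\<integral>\<^sup>+p. ennreal b * indicator {p. \<not> Zfun S n p < b} p \<partial>measure_pmf (S n))"
      by (simp add: nn_integral_cmult)
    also have "\<dots> \<le> (\<integral>\<^sup>+p. ennreal (Zfun S n p) \<partial>measure_pmf (S n))"
      by (intro nn_integral_mono) (auto simp: indicator_def intro: ennreal_leI)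
    also have "\<dots> \<le> ennreal K" using K[OF n(2)] .
    finally have A: "ennreal X \<le> ennreal K" .
    have "b * (1 - measure_pmf.prob (S n) {p. Zfun S n p < b}) > b * (1/2)"
      using n by (intro mult_strict_left_mono) (auto simp: b_def)
    then have B: "X > \<bar>K\<bar> + 1" by (simp add: X_def b_def)
    show False using A B by (auto simp: ennreal_le_iff2)
  qed
  have "Sup (ereal ` Bs) \<ge> ereal 0" using \<open>0 \<in> Bs\<close> by (rule SUP_upper)
  then obtain H where H: "Sup (ereal ` Bs) = ereal H" "H \<ge> 0" using fin
    by (cases "Sup (ereal ` Bs)") auto
  have HA: "Inf (ereal ` As) = ereal H"
    using SC H unfolding cond_strong_converse_def As_def Bs_def by simp
  have lower: "(\<lambda>n. measure_pmf.prob (S n) {p. Zfun S n p < H - \<gamma>}) \<longlonglongrightarrow> 0" if "\<gamma> > 0" for \<gamma>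
  proof -
    have "ereal (H - \<gamma>) < Sup (ereal ` Bs)" using H that by simp
    then obtain b where "b \<in> Bs" "H - \<gamma> < b" by (auto simp: less_SUP_iff)
    then have "H - \<gamma> \<in> Bs" using down[of b "H - \<gamma>"] by simp
    then show ?thesis by (simp add: Bs_def)
  qed
  have upper: "(\<lambda>n. measure_pmf.prob (S n) {p. H + \<gamma> < Zfun S n p}) \<longlonglongrightarrow> 0" if "\<gamma> > 0" for \<gamma>
  proof -
    have "Inf (ereal ` As) < ereal (H + \<gamma>)" using HA that by simp
    then obtain a where "a \<in> As" "a < H + \<gamma>" by (auto simp: INF_less_iff)
    then have "H + \<gamma> \<in> As" using up[of a "H + \<gamma>"] by simp
    then show ?thesis by (simp add: As_def)
  qed
  define e where "e n = (\<integral>\<^sup>+p. ennreal (Zfun S n p) \<partial>measure_pmf (S n))" for n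
  have conv: "(\<lambda>n. enn2real (e n)) \<longlonglongrightarrow> H"
  proof (rule order_tendstoI)
    fix a assume a: "a < H"
    show "eventually (\<lambda>n. a < enn2real (e n)) sequentially"
    proof (cases "a < 0")
      case True
      have "a < enn2real (e n)" for n using True enn2real_nonneg[of "e n"] by linarith
      then show ?thesis by (intro always_eventually allI)
    next
      case False
      define \<gamma> where "\<gamma> = (H - a) / 3"
      have g: "\<gamma> > 0" "H - \<gamma> > 0" using a False by (auto simp: \<gamma>_def)
      have "eventually (\<lambda>n. measure_pmf.prob (S n) {p. Zfun S n p < H - \<gamma>} < \<gamma> / (H - \<gamma>)) sequentially"
        using lower[OF g(1)] g by (intro order_tendstoD) auto
      moreover have "eventually (\<lambda>n. n \<ge> 1) sequentially" by (rule eventually_ge_at_top)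
      ultimately show ?thesis
      proof eventually_elim
        case (elim n)
        define q where "q = measure_pmf.prob (S n) {p. Zfun S n p < H - \<gamma>}"
        have q: "0 \<le> q" "q \<le> 1" by (auto simp: q_def)
        have "ennreal ((H - \<gamma>) * (1 - q)) = ennreal (H - \<gamma>) * emeasure (measure_pmf (S n)) {p. \<not> Zfun S n p < H - \<gamma>}"
          using g q by (simp add: measure_pmf.emeasure_eq_measure prob_not ennreal_mult q_def)
        also have "\<dots> = (\<integral>\<^sup>+p. ennreal (H - \<gamma>) * indicator {p. \<not> Zfun S n p < H - \<gamma>} p \<partial>measure_pmf (S n))"
          by (simp add: nn_integral_cmult)
        also have "\<dots> \<le> e n" unfolding e_def
          by (intro nn_integral_mono) (auto simp: indicator_def intro: ennreal_leI)
        finally have 1: "ennreal ((H - \<gamma>) * (1 - q)) \<le> e n" .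
        have "e n \<le> ennreal K" using K[OF elim(2)] by (simp add: e_def)
        then have "e n < \<top>" using ennreal_less_top[of K] by (rule le_less_trans)
        then have "ennreal (enn2real (e n)) = e n" by simp
        with 1 have "ennreal ((H - \<gamma>) * (1 - q)) \<le> ennreal (enn2real (e n))" by simp
        then have 2: "(H - \<gamma>) * (1 - q) \<le> enn2real (e n)"
          by (subst (asm) ennreal_le_iff) auto
        have 3: "q * (H - \<gamma>) < \<gamma>" using elim(1) g by (simp add: q_def pos_less_divide_eq)
        have 4: "(H - \<gamma>) * (1 - q) = (H - \<gamma>) - q * (H - \<gamma>)" by (simp add: algebra_simps)
        have 5: "a = H - 3 * \<gamma>" by (simp add: \<gamma>_def field_simps)
        show ?case using 2 3 4 5 g by linarith
      qed
    qed
  next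
    fix a assume a: "a > H"
    define \<gamma> where "\<gamma> = (a - H) / 3"
    have g: "\<gamma> > 0" using a by (auto simp: \<gamma>_def)
    have "(\<lambda>n. \<integral>\<^sup>+p. ennreal (Zfun S n p) * indicator {p. H + \<gamma> < Zfun S n p} p \<partial>measure_pmf (S n)) \<longlonglongrightarrow> 0"
      by (rule UI_small[OF UI upper[OF g]])
    then have "eventually (\<lambda>n. (\<integral>\<^sup>+p. ennreal (Zfun S n p) * indicator {p. H + \<gamma> < Zfun S n p} p \<partial>measure_pmf (S n)) < ennreal \<gamma>) sequentially"
      using g by (intro order_tendstoD) auto
    then show "eventually (\<lambda>n. enn2real (e n) < a) sequentially"
    proof eventually_elim
      case (elim n)
      have "e n \<le> (\<integral>\<^sup>+p. ennreal (H + \<gamma>) + ennreal (Zfun S n p) * indicator {p. H + \<gamma> < Zfun S n p} p \<partial>measure_pmf (S n))"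
        unfolding e_def using H g
      proof (intro nn_integral_mono)
        fix p
        show "ennreal (Zfun S n p) \<le> ennreal (H + \<gamma>) + ennreal (Zfun S n p) * indicator {p. H + \<gamma> < Zfun S n p} p"
        proof (cases "H + \<gamma> < Zfun S n p")
          case False then have "ennreal (Zfun S n p) \<le> ennreal (H + \<gamma>)" by (intro ennreal_leI) simp
          then show ?thesis by (simp add: add_increasing2)
        qed simp
      qed
      also have "\<dots> = ennreal (H + \<gamma>) + (\<integral>\<^sup>+p. ennreal (Zfun S n p) * indicator {p. H + \<gamma> < Zfun S n p} p \<partial>measure_pmf (S n))"
        by (simp add: nn_integral_add measure_pmf.emeasure_space_1)
      also have "\<dots> \<le> ennreal (H + \<gamma>) + ennreal \<gamma>" using elim by (intro add_mono) auto
      also have "\<dots> = ennreal (H + 2 * \<gamma>)" using H g by (simp add: ennreal_plus[symmetric] del: ennreal_plus)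
      finally have "enn2real (e n) \<le> H + 2 * \<gamma>" using H g by (simp add: enn2real_leI)
      moreover have "H + 2 * \<gamma> < a" using a by (simp add: \<gamma>_def field_simps)
      ultimately show ?case by linarith
    qed
  qed
  have "(\<lambda>n. cond_entropy_n S n / real n) \<longlonglongrightarrow> H"
  proof (rule Lim_transform_eventually[OF conv])
    show "eventually (\<lambda>n. enn2real (e n) = cond_entropy_n S n / real n) sequentially"
      using eventually_ge_at_top[of 1] by eventually_elim (simp add: e_def cond_entropy_n_div)
  qed
  then have "cond_entropy_rate S = H" unfolding cond_entropy_rate_def by (rule limI)
  then show ?thesis using H lower upper by blast
qed

lemma D_pos_delta:
  assumes "D_lower PI PK > 0"
  shows "\<exists>\<delta>>0. (\<lambda>n. measure_pmf.prob (PI n) {x. (1 / real n) * log 2 (pmf (PI n) x / pmf (PK n) x) < \<delta>}) \<longlonglongrightarrow> 0"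
proof -
  have "ereal 0 < D_lower PI PK" using assms by (simp add: zero_ereal_def)
  then obtain b where "(\<lambda>n. measure_pmf.prob (PI n) {x. (1 / real n) * log 2 (pmf (PI n) x / pmf (PK n) x) < b}) \<longlonglongrightarrow> 0" "0 < b"
    unfolding D_lower_def by (auto simp: less_SUP_iff)
  then show ?thesis by blast
qed

lemma pmf_mix_ge:
  assumes "finite (set_pmf \<alpha>)"
  shows "pmf \<alpha> c * pmf (J c) p \<le> pmf (bind_pmf \<alpha> J) p"
proof (cases "c \<in> set_pmf \<alpha>")
  case True
  then show ?thesis unfolding pmf_mix[OF assms]
    using assms by (intro member_le_sum) (auto intro: mult_nonneg_nonneg)
next
  case False then show ?thesis by (simp add: set_pmf_eq)
qed

lemma pmf_joint_cond: "pmf P (x,y) = pmf (map_pmf snd P) y * condXY P x y"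
proof (cases "pmf (map_pmf snd P) y = 0")
  case True
  then show ?thesis using pmf_le_map_snd[of P x y] pmf_nonneg[of P "(x,y)"] by (simp add: condXY_def)
next
  case False then show ?thesis by (simp add: condXY_def)
qed

lemma log_le_div_ln2: assumes "0 < z" shows "log 2 z \<le> z / ln 2"
proof -
  have "ln z \<le> z" using ln_less_self[OF assms] by simp
  then show ?thesis unfolding log_def by (intro divide_right_mono) auto
qed

lemma Lf_supp: "pmf P p > 0 \<Longrightarrow> Lf P p = - log 2 (condXY P (fst p) (snd p))"
  using condXY_pos[of P "fst p" "snd p"] by (simp add: Lf_def log_divide)

lemma markov_lower:
  assumes pos: "\<And>p. p \<in> set_pmf P \<Longrightarrow> pmf M p > 0"
  shows "measure_pmf.prob P {p. Lf M p < Lf P p - t} \<le> 2 powr (- t)"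
proof -
  define A where "A = {p. Lf M p < Lf P p - t}"
  have pt: "pmf P p \<le> 2 powr (- t) * pmf (map_pmf snd P) (snd p) * condXY M (fst p) (snd p)"
    if "p \<in> A" for p
  proof (cases "pmf P p > 0")
    case True
    have cP: "condXY P (fst p) (snd p) > 0" using True condXY_pos[of P "fst p" "snd p"] by simp
    have cM: "condXY M (fst p) (snd p) > 0" using pos[of p] True condXY_pos[of M "fst p" "snd p"]
      by (simp add: set_pmf_eq)
    have "- log 2 (condXY M (fst p) (snd p)) < - log 2 (condXY P (fst p) (snd p)) - t"
      using that Lf_supp[OF True] Lf_supp[of M p] pos[of p] True by (simp add: A_def set_pmf_eq)
    then have "log 2 (2 powr t * condXY P (fst p) (snd p)) < log 2 (condXY M (fst p) (snd p))"
      using cP by (simp add: log_mult_pos)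
    then have "2 powr t * condXY P (fst p) (snd p) < condXY M (fst p) (snd p)"
      using cP cM by simp
    then have "condXY P (fst p) (snd p) \<le> 2 powr (- t) * condXY M (fst p) (snd p)"
      by (simp add: powr_minus field_simps)
    then have "pmf (map_pmf snd P) (snd p) * condXY P (fst p) (snd p) \<le>
        pmf (map_pmf snd P) (snd p) * (2 powr (- t) * condXY M (fst p) (snd p))"
      by (intro mult_left_mono) auto
    then show ?thesis using pmf_joint_cond[of P "fst p" "snd p"] by (simp add: mult_ac)
  next
    case False
    then have "pmf P p = 0" using pmf_nonneg[of P p] by simp
    then show ?thesis using condXY_nonneg[of M] by simp
  qed
  have "emeasure (measure_pmf P) A = (\<integral>\<^sup>+p. ennreal (pmf P p) * indicator A p \<partial>count_space UNIV)"
    by (simp add: nn_integral_measure_pmf[symmetric])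
  also have "\<dots> \<le> (\<integral>\<^sup>+p. ennreal (2 powr (- t) * pmf (map_pmf snd P) (snd p)) * ennreal (condXY M (fst p) (snd p)) \<partial>count_space UNIV)"
    using pt by (intro nn_integral_mono) (auto simp: indicator_def ennreal_mult[symmetric] condXY_nonneg intro!: ennreal_leI)
  also have "\<dots> = (\<integral>\<^sup>+y. \<integral>\<^sup>+x. ennreal (2 powr (- t) * pmf (map_pmf snd P) y) * ennreal (condXY M x y) \<partial>count_space UNIV \<partial>count_space UNIV)"
    by (subst nn_integral_snd_count_space[symmetric]) simp
  also have "\<dots> = (\<integral>\<^sup>+y. ennreal (2 powr (- t) * pmf (map_pmf snd P) y) * (\<integral>\<^sup>+x. ennreal (condXY M x y) \<partial>count_space UNIV) \<partial>count_space UNIV)"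
    by (simp add: nn_integral_cmult)
  also have "\<dots> \<le> (\<integral>\<^sup>+y. ennreal (2 powr (- t)) * ennreal (pmf (map_pmf snd P) y) \<partial>count_space UNIV)"
    using sum_condXY[of M] by (intro nn_integral_mono) (auto simp: ennreal_mult intro: mult_left_le)
  also have "\<dots> = ennreal (2 powr (- t))"
    by (simp add: nn_integral_cmult nn_integral_pmf_eq_1)
  finally show ?thesis by (simp add: A_def measure_pmf.emeasure_eq_measure)
qed

lemma markov_ratio:
  "measure_pmf.prob q {y. t < log 2 (pmf r y / pmf q y)} \<le> 2 powr (- t)"
proof (cases "t < 0")
  case True
  have "measure_pmf.prob q {y. t < log 2 (pmf r y / pmf q y)} \<le> 1" by simp
  also have "1 \<le> 2 powr (- t)" using True by (intro ge_one_powr_ge_zero) auto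
  finally show ?thesis .
next
  case False
  define A where "A = {y. t < log 2 (pmf r y / pmf q y)}"
  have pt: "pmf q y \<le> 2 powr (- t) * pmf r y" if "y \<in> A" for y
  proof (cases "pmf q y > 0")
    case True
    have lt: "t < log 2 (pmf r y / pmf q y)" using that by (simp add: A_def)
    then have "pmf r y \<noteq> 0" using False by (auto simp: log_def)
    then have rp: "pmf r y > 0" using pmf_nonneg[of r y] by simp
    have "log 2 (2 powr t) < log 2 (pmf r y / pmf q y)" using lt by simp
    then have "2 powr t < pmf r y / pmf q y" using lt rp True by (simp add: less_log_iff)
    then show ?thesis using True by (simp add: powr_minus field_simps)
  next
    case False then show ?thesis using pmf_nonneg[of q y] by simp
  qed
  have "emeasure (measure_pmf q) A = (\<integral>\<^sup>+y. ennreal (pmf q y) * indicator A y \<partial>count_space UNIV)"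
    by (simp add: nn_integral_measure_pmf[symmetric])
  also have "\<dots> \<le> (\<integral>\<^sup>+y. ennreal (2 powr (- t)) * ennreal (pmf r y) \<partial>count_space UNIV)"
    using pt by (intro nn_integral_mono) (auto simp: indicator_def ennreal_mult[symmetric] intro!: ennreal_leI)
  also have "\<dots> = ennreal (2 powr (- t))"
    by (simp add: nn_integral_cmult nn_integral_pmf_eq_1)
  finally show ?thesis by (simp add: A_def measure_pmf.emeasure_eq_measure)
qed

lemma nn_logplus_ratio:
  "(\<integral>\<^sup>+y. ennreal (max 0 (log 2 (pmf r y / pmf q y))) \<partial>measure_pmf q) \<le> ennreal (1 / ln 2)"
proof -
  have pt: "ennreal (pmf q y) * ennreal (max 0 (log 2 (pmf r y / pmf q y))) \<le> ennreal (1 / ln 2) * ennreal (pmf r y)" for y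
  proof (cases "pmf q y > 0 \<and> pmf r y > 0")
    case True
    then have "max 0 (log 2 (pmf r y / pmf q y)) \<le> (pmf r y / pmf q y) / ln 2"
      using log_le_div_ln2[of "pmf r y / pmf q y"] by auto
    then have "pmf q y * max 0 (log 2 (pmf r y / pmf q y)) \<le> pmf q y * ((pmf r y / pmf q y) / ln 2)"
      by (intro mult_left_mono) auto
    also have "\<dots> = 1 / ln 2 * pmf r y" using True by simp
    finally have "ennreal (pmf q y * max 0 (log 2 (pmf r y / pmf q y))) \<le> ennreal (1 / ln 2 * pmf r y)"
      by (rule ennreal_leI)
    moreover have "ennreal (pmf q y * max 0 (log 2 (pmf r y / pmf q y))) = ennreal (pmf q y) * ennreal (max 0 (log 2 (pmf r y / pmf q y)))"
      by (rule ennreal_mult) auto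
    moreover have "ennreal (1 / ln 2 * pmf r y) = ennreal (1 / ln 2) * ennreal (pmf r y)"
      by (rule ennreal_mult) auto
    ultimately show ?thesis by simp
  next
    case False
    then have "pmf q y = 0 \<or> pmf r y = 0" using pmf_nonneg[of q y] pmf_nonneg[of r y] by auto
    then show ?thesis by (auto simp: log_def)
  qed
  have "(\<integral>\<^sup>+y. ennreal (max 0 (log 2 (pmf r y / pmf q y))) \<partial>measure_pmf q) \<le>
     (\<integral>\<^sup>+y. ennreal (1 / ln 2) * ennreal (pmf r y) \<partial>count_space UNIV)"
    unfolding nn_integral_measure_pmf by (intro nn_integral_mono pt)
  also have "\<dots> = ennreal (1 / ln 2)" by (simp add: nn_integral_cmult nn_integral_pmf_eq_1)
  finally show ?thesis .
qed

lemma Lf_upper: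
  assumes dom: "\<And>p. a * pmf P p \<le> pmf M p" and a: "0 < a" and p: "pmf P p > 0"
  shows "Lf M p \<le> Lf P p + log 2 (1 / a) + log 2 (pmf (map_pmf snd M) (snd p) / pmf (map_pmf snd P) (snd p))"
proof -
  obtain x y where xy: "p = (x, y)" by (cases p)
  define QM where "QM = pmf (map_pmf snd M) y"
  define QP where "QP = pmf (map_pmf snd P) y"
  define cP where "cP = condXY P x y"
  have QP: "QP > 0" using p pmf_le_map_snd[of P x y] by (simp add: QP_def xy)
  have cP: "cP > 0" using condXY_pos[of P x y] p by (simp add: cP_def xy)
  have Mp: "pmf M (x,y) > 0" using dom[of p] a p by (simp add: xy) (meson mult_pos_pos order_less_le_trans)
  have QM: "QM > 0" using Mp pmf_le_map_snd[of M x y] by (simp add: QM_def)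
  have "a * (QP * cP) \<le> pmf M (x,y)" using dom[of p] pmf_joint_cond[of P x y] by (simp add: xy QP_def cP_def)
  then have "a * QP * cP / QM \<le> condXY M x y" using QM by (simp add: condXY_def QM_def divide_right_mono mult_ac)
  moreover have "a * QP * cP / QM > 0" using a QP cP QM by simp
  moreover have "condXY M x y > 0" using \<open>a * QP * cP / QM > 0\<close> \<open>a * QP * cP / QM \<le> condXY M x y\<close>
    by linarith
  ultimately have prod: "0 < condXY M x y * (a * QP * cP / QM)" by (intro mult_pos_pos)
  have "1 / condXY M x y \<le> 1 / (a * QP * cP / QM)"
    using divide_left_mono[OF \<open>a * QP * cP / QM \<le> condXY M x y\<close> zero_le_one prod] .
  moreover note \<open>condXY M x y > 0\<close>
  ultimately have "log 2 (1 / condXY M x y) \<le> log 2 (1 / (a * QP * cP / QM))"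
    using a QP cP QM
    by (subst log_le_cancel_iff) auto
  also have "\<dots> = log 2 (1 / cP) + log 2 (1 / a) + log 2 (QM / QP)"
    using a QP cP QM by (simp add: log_divide log_mult_pos)
  finally show ?thesis by (simp add: Lf_def xy QM_def QP_def cP_def)
qed

lemma nn_Lf_mix_bound:
  assumes dom: "\<And>p. a * pmf P p \<le> pmf M p" and a: "0 < a" "a \<le> 1"
  shows "(\<integral>\<^sup>+p. ennreal (Lf M p) * indicator B p \<partial>measure_pmf P) \<le>
     (\<integral>\<^sup>+p. ennreal (Lf P p) * indicator B p \<partial>measure_pmf P) + ennreal (log 2 (1 / a)) + ennreal (1 / ln 2)"
proof -
  define g where "g y = max 0 (log 2 (pmf (map_pmf snd M) y / pmf (map_pmf snd P) y))" for y
  have la: "0 \<le> log 2 (1 / a)" using a by simp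
  have "(\<integral>\<^sup>+p. ennreal (Lf M p) * indicator B p \<partial>measure_pmf P) \<le>
     (\<integral>\<^sup>+p. ennreal (Lf P p) * indicator B p + ennreal (log 2 (1 / a)) + ennreal (g (snd p)) \<partial>measure_pmf P)"
  proof (intro nn_integral_mono_AE AE_pmfI)
    fix p assume "p \<in> set_pmf P"
    then have pp: "pmf P p > 0" by (simp add: set_pmf_eq')
    have "Lf M p * indicator B p \<le> Lf P p * indicator B p + log 2 (1 / a) + g (snd p)"
      using Lf_upper[OF dom a(1) pp] la Lf_nonneg[of M p] Lf_nonneg[of P p]
      by (auto simp: indicator_def g_def)
    show "ennreal (Lf M p) * indicator B p \<le> ennreal (Lf P p) * indicator B p + ennreal (log 2 (1 / a)) + ennreal (g (snd p))"
    proof (cases "p \<in> B")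
      case True
      have "Lf M p \<le> Lf P p + log 2 (1 / a) + g (snd p)"
        using Lf_upper[OF dom a(1) pp] by (auto simp: g_def)
      then have "ennreal (Lf M p) \<le> ennreal (Lf P p + log 2 (1 / a) + g (snd p))"
        by (rule ennreal_leI)
      also have "\<dots> = ennreal (Lf P p) + ennreal (log 2 (1 / a)) + ennreal (g (snd p))"
        using la Lf_nonneg[of P p] by (simp add: ennreal_plus g_def)
      finally show ?thesis using True by simp
    qed simp
  qed
  also have "\<dots> = (\<integral>\<^sup>+p. ennreal (Lf P p) * indicator B p \<partial>measure_pmf P) + ennreal (log 2 (1 / a)) +
      (\<integral>\<^sup>+p. ennreal (g (snd p)) \<partial>measure_pmf P)"
    by (simp add: nn_integral_add measure_pmf.emeasure_space_1)
  also have "(\<integral>\<^sup>+p. ennreal (g (snd p)) \<partial>measure_pmf P) = (\<integral>\<^sup>+y. ennreal (g y) \<partial>measure_pmf (map_pmf snd P))"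
    by (simp add: nn_integral_map_pmf)
  also have "\<dots> \<le> ennreal (1 / ln 2)" unfolding g_def by (rule nn_logplus_ratio)
  finally show ?thesis by (simp add: add_left_mono)
qed

locale mixsrc =
  fixes m :: nat and mm :: "nat \<Rightarrow> nat"
    and PX :: "nat \<Rightarrow> nat \<Rightarrow> ('x::countable) list pmf"
    and W :: "nat \<Rightarrow> nat \<Rightarrow> nat \<Rightarrow> 'x list \<Rightarrow> ('y::countable) list pmf"
    and \<alpha> :: "(nat \<times> nat) pmf"
  assumes mm_pos: "\<forall>i<m. 0 < mm i"
    and alpha_supp: "set_pmf \<alpha> = {(i, j). i < m \<and> j < mm i}"
    and PX_len: "\<forall>i<m. \<forall>n. set_pmf (PX i n) \<subseteq> {xs. length xs = n}"
    and PX_pos: "\<forall>i<m. \<forall>n xs. length xs = n \<longrightarrow> pmf (PX i n) xs > 0"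
    and UI: "\<forall>i<m. \<forall>j<mm i. src_uniformly_integrable (joint_src (PX i) (W i j))"
    and SC: "\<forall>i<m. \<forall>j<mm i. cond_strong_converse (joint_src (PX i) (W i j))"
    and D_pos: "\<forall>i<m. \<forall>k<m. i \<noteq> k \<longrightarrow> D_lower (PX i) (PX k) > 0"
begin

definition J :: "nat \<Rightarrow> nat \<times> nat \<Rightarrow> ('x list \<times> 'y list) pmf" where
  "J n = (\<lambda>(i, j). joint_src (PX i) (W i j) n)"

definition M :: "nat \<Rightarrow> ('x list \<times> 'y list) pmf" where
  "M n = bind_pmf \<alpha> (J n)"

definition Sc :: "nat \<times> nat \<Rightarrow> nat \<Rightarrow> ('x list \<times> 'y list) pmf" where
  "Sc c = joint_src (PX (fst c)) (W (fst c) (snd c))"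

abbreviation C where "C \<equiv> set_pmf \<alpha>"

definition a :: "nat \<times> nat \<Rightarrow> real" where "a c = pmf \<alpha> c"

definition ai :: "nat \<Rightarrow> real" where "ai i = (\<Sum>j<mm i. pmf \<alpha> (i, j))"

definition Hc :: "nat \<times> nat \<Rightarrow> real" where "Hc c = cond_entropy_rate (Sc c)"

definition A :: "nat \<Rightarrow> real" where "A i = Max {Hc (i, j) | j. j < mm i}"

definition T :: real where "T = (\<Sum>i<m. ai i * A i)"

lemma J_Sc: "J n c = Sc c n"
  by (cases c) (simp add: J_def Sc_def)

lemma C_Sigma: "C = Sigma {..<m} (\<lambda>i. {..<mm i})"
  using alpha_supp by auto

lemma finC: "finite C"
  unfolding C_Sigma by auto

lemma C_mem: "c \<in> C \<longleftrightarrow> fst c < m \<and> snd c < mm (fst c)"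
  using alpha_supp by (cases c) auto

lemma a_pos: "c \<in> C \<Longrightarrow> 0 < a c"
  by (simp add: a_def pmf_positive)

lemma a_le1: "a c \<le> 1"
  by (simp add: a_def pmf_le_1)

lemma a_nonneg: "0 \<le> a c"
  by (simp add: a_def)

lemma sum_C: "(\<Sum>c\<in>C. f c) = (\<Sum>i<m. \<Sum>j<mm i. f (i, j))"
  unfolding C_Sigma by (simp add: sum.Sigma)

lemma sum_a: "(\<Sum>c\<in>C. a c) = 1"
proof -
  have "(\<Sum>c\<in>C. a c) = measure_pmf.prob \<alpha> C"
    unfolding a_def by (subst measure_measure_pmf_finite[OF finC]) simp
  also have "\<dots> = 1" by (simp add: measure_pmf.prob_eq_1 AE_measure_pmf)
  finally show ?thesis .
qed

lemma sum_C_fst: "(\<Sum>c\<in>C. a c * f (fst c)) = (\<Sum>i<m. ai i * f i)"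
  unfolding sum_C by (simp add: ai_def a_def sum_distrib_right)

lemma ai_pos: "i < m \<Longrightarrow> 0 < ai i"
proof -
  assume i: "i < m"
  then have "(i, 0) \<in> C" using mm_pos by (simp add: C_mem)
  then have "0 < pmf \<alpha> (i, 0)" by (simp add: pmf_positive)
  moreover have "pmf \<alpha> (i, 0) \<le> ai i" unfolding ai_def
    using mm_pos i by (intro member_le_sum) auto
  ultimately show ?thesis by simp
qed

lemma UI_c: "c \<in> C \<Longrightarrow> src_uniformly_integrable (Sc c)"
  using UI by (auto simp: C_mem Sc_def)

lemma SC_c: "c \<in> C \<Longrightarrow> cond_strong_converse (Sc c)"
  using SC by (auto simp: C_mem Sc_def)

lemma Hc_spec:
  assumes "c \<in> C"
  shows "Hc c \<ge> 0"
    "\<And>\<gamma>. \<gamma> > 0 \<Longrightarrow> (\<lambda>n. measure_pmf.prob (Sc c n) {p. Hc c + \<gamma> < Zfun (Sc c) n p}) \<longlonglongrightarrow> 0"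
    "\<And>\<gamma>. \<gamma> > 0 \<Longrightarrow> (\<lambda>n. measure_pmf.prob (Sc c n) {p. Zfun (Sc c) n p < Hc c - \<gamma>}) \<longlonglongrightarrow> 0"
  using entropy_spec[OF UI_c[OF assms] SC_c[OF assms]] unfolding Hc_def[symmetric] by auto

lemma A_fin: "finite {Hc (i, j) | j. j < mm i}" by auto

lemma A_ne: "i < m \<Longrightarrow> {Hc (i, j) | j. j < mm i} \<noteq> {}"
  using mm_pos by auto

lemma A_ge: "j < mm i \<Longrightarrow> Hc (i, j) \<le> A i"
  unfolding A_def by (rule Max_ge[OF A_fin]) auto

lemma A_attained: "i < m \<Longrightarrow> \<exists>j<mm i. Hc (i, j) = A i"
proof -
  assume i: "i < m"
  have "A i \<in> {Hc (i, j) | j. j < mm i}" unfolding A_def using A_ne[OF i] by (rule Max_in[OF A_fin])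
  then show ?thesis by auto
qed

lemma A_nonneg: "i < m \<Longrightarrow> 0 \<le> A i"
proof -
  assume i: "i < m"
  then obtain j where "j < mm i" "Hc (i, j) = A i" using A_attained by blast
  then show ?thesis using Hc_spec(1)[of "(i,j)"] i by (simp add: C_mem)
qed

lemma delta_exists:
  "\<exists>\<delta>>0. \<forall>i<m. \<forall>k<m. i \<noteq> k \<longrightarrow>
     (\<lambda>n. measure_pmf.prob (PX i n) {x. (1 / real n) * log 2 (pmf (PX i n) x / pmf (PX k n) x) < \<delta>}) \<longlonglongrightarrow> 0"
proof -
  define P where "P = {(i, k). i < m \<and> k < m \<and> i \<noteq> k}"
  have "\<forall>q\<in>P. \<exists>\<delta>>0. (\<lambda>n. measure_pmf.prob (PX (fst q) n) {x. (1 / real n) * log 2 (pmf (PX (fst q) n) x / pmf (PX (snd q) n) x) < \<delta>}) \<longlonglongrightarrow> 0"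
  proof
    fix q assume "q \<in> P"
    then have "D_lower (PX (fst q)) (PX (snd q)) > 0" using D_pos by (auto simp: P_def)
    then show "\<exists>\<delta>>0. (\<lambda>n. measure_pmf.prob (PX (fst q) n) {x. (1 / real n) * log 2 (pmf (PX (fst q) n) x / pmf (PX (snd q) n) x) < \<delta>}) \<longlonglongrightarrow> 0"
      by (rule D_pos_delta)
  qed
  from bchoice[OF this] obtain d where d0: "\<forall>q\<in>P. d q > 0 \<and> (\<lambda>n. measure_pmf.prob (PX (fst q) n) {x. (1 / real n) * log 2 (pmf (PX (fst q) n) x / pmf (PX (snd q) n) x) < d q}) \<longlonglongrightarrow> 0"
    by blast
  then have d: "\<And>q. q \<in> P \<Longrightarrow> d q > 0 \<and> (\<lambda>n. measure_pmf.prob (PX (fst q) n) {x. (1 / real n) * log 2 (pmf (PX (fst q) n) x / pmf (PX (snd q) n) x) < d q}) \<longlonglongrightarrow> 0"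
    by blast
  have finP: "finite P" by (rule finite_subset[of _ "{..<m} \<times> {..<m}"]) (auto simp: P_def)
  define \<delta> where "\<delta> = Min (insert 1 (d ` P))"
  have \<delta>pos: "\<delta> > 0" unfolding \<delta>_def using finP d by (subst Min_gr_iff) auto
  have \<delta>le: "\<delta> \<le> d q" if "q \<in> P" for q unfolding \<delta>_def using finP that by (intro Min_le) auto
  have "(\<lambda>n. measure_pmf.prob (PX i n) {x. (1 / real n) * log 2 (pmf (PX i n) x / pmf (PX k n) x) < \<delta>}) \<longlonglongrightarrow> 0"
    if "i < m" "k < m" "i \<noteq> k" for i k
  proof (rule tendsto0_sandwich_prob)
    have q: "(i, k) \<in> P" using that by (simp add: P_def)
    show "(\<lambda>n. measure_pmf.prob (PX i n) {x. (1 / real n) * log 2 (pmf (PX i n) x / pmf (PX k n) x) < d (i,k)}) \<longlonglongrightarrow> 0"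
      using d[OF q] by simp
    show "{x. (1 / real n) * log 2 (pmf (PX i n) x / pmf (PX k n) x) < \<delta>} \<subseteq>
        {x. (1 / real n) * log 2 (pmf (PX i n) x / pmf (PX k n) x) < d (i,k)}" for n
      using \<delta>le[OF q] by auto
  qed
  then show ?thesis using \<delta>pos by blast
qed

lemma map_fst_M: "map_pmf fst (M n) = bind_pmf \<alpha> (\<lambda>c. PX (fst c) n)"
  unfolding M_def map_bind_pmf J_Sc Sc_def map_fst_joint ..

lemma pmf_PXn: "pmf (map_pmf fst (M n)) x = (\<Sum>c\<in>C. a c * pmf (PX (fst c) n) x)"
  unfolding map_fst_M by (simp add: pmf_mix[OF finC] a_def)

lemma prob_M_fst: "measure_pmf.prob (M n) {p. fst p = x \<and> Q p} =
   (\<Sum>c\<in>C. a c * pmf (PX (fst c) n) x * measure_pmf.prob (W (fst c) (snd c) n x) {y. Q (x, y)})"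
  unfolding M_def prob_mix[OF finC] J_Sc Sc_def prob_joint_fst by (simp add: a_def mult_ac)

lemma M_dom: "a c * pmf (J n c) p \<le> pmf (M n) p"
  unfolding M_def a_def by (rule pmf_mix_ge[OF finC])

lemma nn_M: "(\<integral>\<^sup>+p. f p \<partial>measure_pmf (M n)) = (\<Sum>c\<in>C. ennreal (a c) * (\<integral>\<^sup>+p. f p \<partial>measure_pmf (J n c)))"
  unfolding M_def a_def by (rule nn_integral_mix[OF finC])

lemma nn_marg: "(\<integral>\<^sup>+x. f x \<partial>measure_pmf (map_pmf fst (M n))) = (\<Sum>c\<in>C. ennreal (a c) * (\<integral>\<^sup>+x. f x \<partial>measure_pmf (PX (fst c) n)))"
  unfolding map_fst_M a_def by (rule nn_integral_mix[OF finC])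

lemma PX_supp_len: "i < m \<Longrightarrow> x \<in> set_pmf (PX i n) \<Longrightarrow> length x = n"
  using PX_len by auto

lemma PX_zero: "i < m \<Longrightarrow> length x \<noteq> n \<Longrightarrow> pmf (PX i n) x = 0"
  using PX_supp_len[of i x n] by (auto simp: set_pmf_eq)

lemma PXn_pos: "length x = n \<Longrightarrow> 0 < pmf (map_pmf fst (M n)) x"
proof -
  assume len: "length x = n"
  obtain c where c: "c \<in> C" using set_pmf_not_empty[of \<alpha>] by blast
  then have "fst c < m" by (simp add: C_mem)
  then have "0 < pmf (PX (fst c) n) x" using len PX_pos by auto
  then have "0 < a c * pmf (PX (fst c) n) x" using a_pos[OF c] by simp
  also have "\<dots> \<le> (\<Sum>c\<in>C. a c * pmf (PX (fst c) n) x)"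
    using c finC by (intro member_le_sum) (auto simp: a_nonneg)
  finally show ?thesis by (simp add: pmf_PXn)
qed

lemma prob_supp0: "i < m \<Longrightarrow> measure_pmf.prob (PX i n) {x. length x \<noteq> n} = 0"
  using PX_supp_len[of i] by (subst measure_pmf_zero_iff) auto

lemma prob_mono_supp:
  assumes "\<And>p. p \<in> set_pmf P \<Longrightarrow> p \<in> A1 \<Longrightarrow> p \<in> B1"
  shows "measure_pmf.prob P A1 \<le> measure_pmf.prob P B1"
proof -
  have "measure_pmf.prob P A1 = measure_pmf.prob P (A1 \<inter> set_pmf P)" by (simp add: measure_Int_set_pmf)
  also have "\<dots> \<le> measure_pmf.prob P B1" using assms by (intro measure_pmf.finite_measure_mono) auto
  finally show ?thesis .
qed

end

lemma powr_neg_lim: assumes "0 < r" shows "(\<lambda>n. 2 powr (- (real n * r))) \<longlonglongrightarrow> 0"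
proof -
  have eq: "2 powr (- (real n * r)) = (2 powr (- r)) ^ n" for n
    by (simp add: powr_realpow[symmetric] powr_powr mult.commute)
  have "norm (2 powr (- r) :: real) < 1" using assms by (simp add: powr_minus inverse_less_1_iff)
  then show ?thesis unfolding eq by (rule LIMSEQ_power_zero)
qed

lemma markov_x:
  assumes "0 < s"
  shows "measure_pmf.prob (PX' n) {x. s \<le> measure_pmf.prob (W' n x) {y. Q (x, y)}}
     \<le> measure_pmf.prob (joint_src PX' W' n) {p. Q p} / s"
proof -
  define f where "f x = measure_pmf.prob (W' n x) {y. Q (x, y)}" for x
  have "ennreal s * emeasure (measure_pmf (PX' n)) {x. s \<le> f x} =
      (\<integral>\<^sup>+x. ennreal s * indicator {x. s \<le> f x} x \<partial>measure_pmf (PX' n))"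
    by (simp add: nn_integral_cmult)
  also have "\<dots> \<le> (\<integral>\<^sup>+x. ennreal (f x) \<partial>measure_pmf (PX' n))"
    by (intro nn_integral_mono) (auto simp: indicator_def intro: ennreal_leI)
  also have "\<dots> = emeasure (measure_pmf (joint_src PX' W' n)) {p. Q p}"
    unfolding emeasure_joint f_def by (simp add: measure_pmf.emeasure_eq_measure vimage_def)
  finally have "ennreal (s * measure_pmf.prob (PX' n) {x. s \<le> f x}) \<le> ennreal (measure_pmf.prob (joint_src PX' W' n) {p. Q p})"
    using assms by (simp add: measure_pmf.emeasure_eq_measure ennreal_mult)
  then have "s * measure_pmf.prob (PX' n) {x. s \<le> f x} \<le> measure_pmf.prob (joint_src PX' W' n) {p. Q p}"
    by (subst (asm) ennreal_le_iff) auto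
  then show ?thesis using assms by (simp add: f_def pos_le_divide_eq mult.commute)
qed

context mixsrc begin

definition \<delta> :: real where
  "\<delta> = (SOME \<delta>. \<delta> > 0 \<and> (\<forall>i<m. \<forall>k<m. i \<noteq> k \<longrightarrow>
     (\<lambda>n. measure_pmf.prob (PX i n) {x. (1 / real n) * log 2 (pmf (PX i n) x / pmf (PX k n) x) < \<delta>}) \<longlonglongrightarrow> 0))"

lemma delta: "\<delta> > 0" "\<And>i k. i < m \<Longrightarrow> k < m \<Longrightarrow> i \<noteq> k \<Longrightarrow>
     (\<lambda>n. measure_pmf.prob (PX i n) {x. (1 / real n) * log 2 (pmf (PX i n) x / pmf (PX k n) x) < \<delta>}) \<longlonglongrightarrow> 0"
  using someI_ex[OF delta_exists] unfolding \<delta>_def[symmetric] by auto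

definition own :: "nat \<Rightarrow> nat \<Rightarrow> 'x list \<Rightarrow> bool" where
  "own n i x \<longleftrightarrow> length x = n \<and> (\<forall>k<m. k \<noteq> i \<longrightarrow> 2 powr (real n * \<delta>) * pmf (PX k n) x \<le> pmf (PX i n) x)"

lemma own_le: "own n i x \<Longrightarrow> k < m \<Longrightarrow> pmf (PX k n) x \<le> pmf (PX i n) x"
proof (cases "k = i")
  case False
  assume o: "own n i x" and k: "k < m"
  then have "2 powr (real n * \<delta>) * pmf (PX k n) x \<le> pmf (PX i n) x" using False by (auto simp: own_def)
  moreover have "1 \<le> 2 powr (real n * \<delta>)" using delta(1) by (intro ge_one_powr_ge_zero) auto
  moreover have "0 \<le> pmf (PX k n) x" by simp
  ultimately show ?thesis by (meson dual_order.trans mult_le_cancel_right1 not_less)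
qed simp

lemma own_small: "own n i x \<Longrightarrow> k < m \<Longrightarrow> k \<noteq> i \<Longrightarrow> pmf (PX k n) x \<le> 2 powr (- (real n * \<delta>)) * pmf (PX i n) x"
  by (auto simp: own_def powr_minus field_simps)

lemma own_prob: assumes i: "i < m" shows "(\<lambda>n. measure_pmf.prob (PX i n) {x. \<not> own n i x}) \<longlonglongrightarrow> 0"
proof -
  define K where "K = {k. k < m \<and> k \<noteq> i}"
  have finK: "finite K" by (simp add: K_def)
  define Dv where "Dv n k = {x. (1 / real n) * log 2 (pmf (PX i n) x / pmf (PX k n) x) < \<delta>}" for n k
  have sub: "{x. \<not> own n i x} \<subseteq> {x. length x \<noteq> n} \<union> (\<Union>k\<in>K. Dv n k)" for n
  proof
    fix x assume "x \<in> {x. \<not> own n i x}"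
    then have no: "\<not> own n i x" by simp
    show "x \<in> {x. length x \<noteq> n} \<union> (\<Union>k\<in>K. Dv n k)"
    proof (rule ccontr)
      assume "\<not> ?thesis"
      then have len: "length x = n" and nd: "\<And>k. k \<in> K \<Longrightarrow> x \<notin> Dv n k" by auto
      have "2 powr (real n * \<delta>) * pmf (PX k n) x \<le> pmf (PX i n) x" if k: "k < m" "k \<noteq> i" for k
      proof (cases "n = 0")
        case True
        then show ?thesis using nd[of k] k by (simp add: K_def Dv_def delta(1))
      next
        case False
        have pk: "pmf (PX k n) x > 0" and pi: "pmf (PX i n) x > 0" using PX_pos len k i by auto
        have "\<delta> \<le> (1 / real n) * log 2 (pmf (PX i n) x / pmf (PX k n) x)"
          using nd[of k] k by (auto simp: K_def Dv_def)
        then have "real n * \<delta> \<le> log 2 (pmf (PX i n) x / pmf (PX k n) x)"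
          using False by (simp add: field_simps)
        then have "2 powr (real n * \<delta>) \<le> pmf (PX i n) x / pmf (PX k n) x"
          using pk pi by (simp add: le_log_iff)
        then show ?thesis using pk by (simp add: field_simps)
      qed
      then have "own n i x" using len by (simp add: own_def)
      then show False using no by simp
    qed
  qed
  have bound: "measure_pmf.prob (PX i n) {x. \<not> own n i x} \<le>
      measure_pmf.prob (PX i n) {x. length x \<noteq> n} + (\<Sum>k\<in>K. measure_pmf.prob (PX i n) (Dv n k))" for n
  proof -
    have "measure_pmf.prob (PX i n) {x. \<not> own n i x} \<le> measure_pmf.prob (PX i n) ({x. length x \<noteq> n} \<union> (\<Union>k\<in>K. Dv n k))"
      by (rule measure_pmf.finite_measure_mono[OF sub]) simp
    also have "\<dots> \<le> measure_pmf.prob (PX i n) {x. length x \<noteq> n} + measure_pmf.prob (PX i n) (\<Union>k\<in>K. Dv n k)"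
      by (rule measure_Un_le) auto
    also have "measure_pmf.prob (PX i n) (\<Union>k\<in>K. Dv n k) \<le> (\<Sum>k\<in>K. measure_pmf.prob (PX i n) (Dv n k))"
      by (rule measure_pmf.finite_measure_subadditive_finite[OF finK]) auto
    finally show ?thesis by simp
  qed
  have lim: "(\<lambda>n. measure_pmf.prob (PX i n) {x. length x \<noteq> n} + (\<Sum>k\<in>K. measure_pmf.prob (PX i n) (Dv n k))) \<longlonglongrightarrow> 0 + (\<Sum>k\<in>K. 0)"
    using prob_supp0[OF i] delta(2)[OF i] by (intro tendsto_add tendsto_sum) (auto simp: K_def Dv_def)
  show ?thesis
    by (rule tendsto_sandwich[OF _ _ tendsto_const lim[simplified]]) (simp_all add: bound)
qed

end

context mixsrc begin

definition ji :: "nat \<Rightarrow> nat" where "ji i = (SOME j. j < mm i \<and> Hc (i, j) = A i)"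

lemma ji: "i < m \<Longrightarrow> ji i < mm i \<and> Hc (i, ji i) = A i"
  unfolding ji_def by (rule someI_ex) (rule A_attained)

lemma ji_C: "i < m \<Longrightarrow> (i, ji i) \<in> C"
  using ji by (simp add: C_mem)

lemma M_pos: "c \<in> C \<Longrightarrow> p \<in> set_pmf (J n c) \<Longrightarrow> pmf (M n) p > 0"
proof -
  assume c: "c \<in> C" and p: "p \<in> set_pmf (J n c)"
  have "0 < a c * pmf (J n c) p" using a_pos[OF c] p by (simp add: set_pmf_eq')
  also have "\<dots> \<le> pmf (M n) p" by (rule M_dom)
  finally show ?thesis .
qed

definition Gl :: "real \<Rightarrow> nat \<Rightarrow> nat \<Rightarrow> 'x list set" where
  "Gl \<gamma> n i = {x. own n i x \<and> measure_pmf.prob (W i (ji i) n x) {y. Lf (M n) (x, y) \<le> real n * (A i - \<gamma>)} < 1/2}"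

lemma PXn_le_own: assumes "own n i x" shows "pmf (map_pmf fst (M n)) x \<le> pmf (PX i n) x"
proof -
  have "pmf (map_pmf fst (M n)) x = (\<Sum>c\<in>C. a c * pmf (PX (fst c) n) x)" by (rule pmf_PXn)
  also have "\<dots> \<le> (\<Sum>c\<in>C. a c * pmf (PX i n) x)"
    using assms by (intro sum_mono mult_left_mono own_le) (auto simp: C_mem a_nonneg)
  also have "\<dots> = pmf (PX i n) x" by (simp add: sum_distrib_right[symmetric] sum_a)
  finally show ?thesis .
qed

lemma hbar_low:
  assumes eps: "0 < \<epsilon>" "\<forall>c\<in>C. 2 * \<epsilon> < a c" and i: "i < m" and x: "x \<in> Gl \<gamma> n i"
  shows "real n * (A i - \<gamma>) \<le> hbar (M n) \<epsilon> x"
proof -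
  define c where "c = (i, ji i)"
  have c: "c \<in> C" using ji_C[OF i] by (simp add: c_def)
  have o: "own n i x" and q: "measure_pmf.prob (W i (ji i) n x) {y. Lf (M n) (x, y) \<le> real n * (A i - \<gamma>)} < 1/2"
    using x by (auto simp: Gl_def)
  have len: "length x = n" using o by (simp add: own_def)
  have PXn: "0 < pmf (map_pmf fst (M n)) x" using PXn_pos[OF len] .
  have Pi: "0 < pmf (PX i n) x" using PX_pos i len by auto
  define qq where "qq = measure_pmf.prob (W i (ji i) n x) {y. real n * (A i - \<gamma>) < Lf (M n) (x, y)}"
  have qq: "qq > 1/2" using q prob_not[of "W i (ji i) n x" "\<lambda>y. Lf (M n) (x, y) \<le> real n * (A i - \<gamma>)"]
    by (simp add: qq_def not_le)
  define f where "f c' = a c' * pmf (PX (fst c') n) x * measure_pmf.prob (W (fst c') (snd c') n x) {y. real n * (A i - \<gamma>) < Lf (M n) (x, y)}" for c'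
  have "a c * pmf (PX i n) x * qq = f c" by (simp add: f_def c_def qq_def)
  also have "\<dots> \<le> (\<Sum>c\<in>C. f c)" by (rule member_le_sum) (auto simp: f_def a_nonneg c finC)
  also have "\<dots> = (\<Sum>c\<in>C. a c * pmf (PX (fst c) n) x * measure_pmf.prob (W (fst c) (snd c) n x) {y. real n * (A i - \<gamma>) < Lf (M n) (x, y)})"
    by (simp add: f_def)
  also have "\<dots> = measure_pmf.prob (M n) {p. fst p = x \<and> real n * (A i - \<gamma>) < Lf (M n) p}"
    by (rule prob_M_fst[symmetric])
  finally have num: "a c * pmf (PX i n) x * qq \<le> measure_pmf.prob (M n) {p. fst p = x \<and> real n * (A i - \<gamma>) < Lf (M n) p}" .
  have "\<epsilon> < a c * qq"
  proof -
    have "2 * \<epsilon> < a c" using eps c by auto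
    moreover have "a c * (1/2) < a c * qq" using qq a_pos[OF c] by (intro mult_strict_left_mono) auto
    ultimately show ?thesis by simp
  qed
  also have "a c * qq = a c * pmf (PX i n) x * qq / pmf (PX i n) x" using Pi by simp
  also have "\<dots> \<le> measure_pmf.prob (M n) {p. fst p = x \<and> real n * (A i - \<gamma>) < Lf (M n) p} / pmf (PX i n) x"
    using num Pi by (intro divide_right_mono) auto
  also have "\<dots> \<le> measure_pmf.prob (M n) {p. fst p = x \<and> real n * (A i - \<gamma>) < Lf (M n) p} / pmf (map_pmf fst (M n)) x"
    using PXn PXn_le_own[OF o] by (intro divide_left_mono) auto
  also have "\<dots> = cp (M n) x (real n * (A i - \<gamma>))" by (simp add: cp_def)
  finally show ?thesis by (rule hbar_ge[OF _ eps(1) PXn])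
qed

lemma Gl_prob:
  assumes i: "i < m" and g: "\<gamma> > 0"
  shows "(\<lambda>n. measure_pmf.prob (PX i n) {x. x \<notin> Gl \<gamma> n i}) \<longlonglongrightarrow> 0"
proof -
  define c where "c = (i, ji i)"
  have c: "c \<in> C" using ji_C[OF i] by (simp add: c_def)
  have Hc: "Hc c = A i" using ji[OF i] by (simp add: c_def)
  define Q where "Q n p \<longleftrightarrow> Lf (M n) p \<le> real n * (A i - \<gamma>)" for n p
  have Jc: "J n c = joint_src (PX i) (W i (ji i)) n" for n by (simp add: J_def c_def)
  have b1: "measure_pmf.prob (PX i n) {x. x \<notin> Gl \<gamma> n i} \<le>
      measure_pmf.prob (PX i n) {x. \<not> own n i x} + measure_pmf.prob (PX i n) {x. 1/2 \<le> measure_pmf.prob (W i (ji i) n x) {y. Q n (x, y)}}" for n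
  proof -
    have "measure_pmf.prob (PX i n) {x. x \<notin> Gl \<gamma> n i} \<le>
        measure_pmf.prob (PX i n) ({x. \<not> own n i x} \<union> {x. 1/2 \<le> measure_pmf.prob (W i (ji i) n x) {y. Q n (x, y)}})"
      by (intro measure_pmf.finite_measure_mono) (auto simp: Gl_def Q_def)
    also have "\<dots> \<le> measure_pmf.prob (PX i n) {x. \<not> own n i x} + measure_pmf.prob (PX i n) {x. 1/2 \<le> measure_pmf.prob (W i (ji i) n x) {y. Q n (x, y)}}"
      by (rule measure_Un_le) auto
    finally show ?thesis .
  qed
  have b2: "measure_pmf.prob (PX i n) {x. 1/2 \<le> measure_pmf.prob (W i (ji i) n x) {y. Q n (x, y)}}
      \<le> 2 * measure_pmf.prob (J n c) {p. Q n p}" for n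
    using markov_x[of "1/2" "PX i" n "W i (ji i)" "Q n"] by (simp add: Jc)
  have b3: "measure_pmf.prob (J n c) {p. Q n p} \<le>
      2 powr (- (real n * (\<gamma> / 3))) + measure_pmf.prob (Sc c n) {p. Zfun (Sc c) n p < Hc c - \<gamma> / 3}"
    if n: "n \<ge> 1" for n
  proof -
    have "measure_pmf.prob (J n c) {p. Q n p} \<le>
        measure_pmf.prob (J n c) ({p. Lf (M n) p < Lf (J n c) p - real n * (\<gamma> / 3)} \<union> {p. Zfun (Sc c) n p < Hc c - \<gamma> / 3})"
    proof (rule measure_pmf.finite_measure_mono)
      show "{p. Q n p} \<subseteq> {p. Lf (M n) p < Lf (J n c) p - real n * (\<gamma> / 3)} \<union> {p. Zfun (Sc c) n p < Hc c - \<gamma> / 3}"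
      proof (rule subsetI, rule ccontr)
        fix p assume p: "p \<in> {p. Q n p}" and "p \<notin> {p. Lf (M n) p < Lf (J n c) p - real n * (\<gamma> / 3)} \<union> {p. Zfun (Sc c) n p < Hc c - \<gamma> / 3}"
        then have h1: "Lf (J n c) p - real n * (\<gamma> / 3) \<le> Lf (M n) p" and h2: "Hc c - \<gamma> / 3 \<le> Zfun (Sc c) n p" by auto
        have "real n * Zfun (Sc c) n p = Lf (J n c) p" using n by (simp add: Zfun_Lf J_Sc)
        moreover have "real n * (Hc c - \<gamma> / 3) \<le> real n * Zfun (Sc c) n p"
          by (rule mult_left_mono) (use h2 in auto)
        ultimately have "real n * (Hc c - \<gamma> / 3) \<le> Lf (J n c) p" by simp
        with h1 have "real n * (Hc c - 2 * \<gamma> / 3) \<le> Lf (M n) p" by (simp add: algebra_simps)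
        moreover have "real n * (A i - \<gamma>) < real n * (Hc c - 2 * \<gamma> / 3)"
          using n g Hc by (intro mult_strict_left_mono) auto
        ultimately show False using p by (simp add: Q_def)
      qed
    qed simp
    also have "\<dots> \<le> measure_pmf.prob (J n c) {p. Lf (M n) p < Lf (J n c) p - real n * (\<gamma> / 3)} +
        measure_pmf.prob (J n c) {p. Zfun (Sc c) n p < Hc c - \<gamma> / 3}"
      by (rule measure_Un_le) auto
    also have "measure_pmf.prob (J n c) {p. Lf (M n) p < Lf (J n c) p - real n * (\<gamma> / 3)} \<le> 2 powr (- (real n * (\<gamma> / 3)))"
      by (rule markov_lower) (rule M_pos[OF c])
    finally show ?thesis by (simp add: J_Sc)
  qed
  have lim: "(\<lambda>n. measure_pmf.prob (PX i n) {x. \<not> own n i x} + 2 * (2 powr (- (real n * (\<gamma> / 3))) +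
       measure_pmf.prob (Sc c n) {p. Zfun (Sc c) n p < Hc c - \<gamma> / 3})) \<longlonglongrightarrow> 0 + 2 * (0 + 0)"
    using own_prob[OF i] powr_neg_lim[of "\<gamma>/3"] Hc_spec(3)[OF c, of "\<gamma>/3"] g
    by (intro tendsto_add tendsto_mult tendsto_const) auto
  have lim': "(\<lambda>n. measure_pmf.prob (PX i n) {x. \<not> own n i x} + 2 * (2 powr (- (real n * (\<gamma> / 3))) +
       measure_pmf.prob (Sc c n) {p. Zfun (Sc c) n p < Hc c - \<gamma> / 3})) \<longlonglongrightarrow> 0"
    using lim by simp
  show ?thesis
  proof (rule tendsto_sandwich[OF _ _ tendsto_const lim'])
    show "eventually (\<lambda>n. 0 \<le> measure_pmf.prob (PX i n) {x. x \<notin> Gl \<gamma> n i}) sequentially" by simp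
    show "eventually (\<lambda>n. measure_pmf.prob (PX i n) {x. x \<notin> Gl \<gamma> n i} \<le> measure_pmf.prob (PX i n) {x. \<not> own n i x} + 2 * (2 powr (- (real n * (\<gamma> / 3))) +
       measure_pmf.prob (Sc c n) {p. Zfun (Sc c) n p < Hc c - \<gamma> / 3})) sequentially"
      using eventually_ge_at_top[of 1]
    proof eventually_elim
      case (elim n)
      show ?case using b1[of n] b2[of n] b3[OF elim] by argo
    qed
  qed
qed

end

context mixsrc begin

lemma lower_bound:
  assumes eps: "0 < \<epsilon>" "\<forall>c\<in>C. 2 * \<epsilon> < a c" and g: "\<gamma> > 0"
  shows "eventually (\<lambda>n. ennreal (T - 2 * \<gamma>) \<le> ennreal (1 / real n) * Hs_eps M \<epsilon> n) sequentially"
proof -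
  obtain c0 where c0: "c0 \<in> C" using set_pmf_not_empty[of \<alpha>] by blast
  have eps1: "\<epsilon> < 1" using eps c0 a_le1[of c0] by force
  define mc where "mc c = max 0 (A (fst c) - \<gamma>)" for c :: "nat \<times> nat"
  define r where "r n = (\<Sum>c\<in>C. a c * mc c * measure_pmf.prob (PX (fst c) n) (Gl \<gamma> n (fst c)))" for n
  define R where "R = (\<Sum>c\<in>C. a c * mc c)"
  have r_le: "ennreal (r n) \<le> ennreal (1 / real n) * Hs_eps M \<epsilon> n" if n: "n \<ge> 1" for n
  proof -
    have I: "ennreal (real n * mc c) * ennreal (measure_pmf.prob (PX (fst c) n) (Gl \<gamma> n (fst c))) \<le>
        (\<integral>\<^sup>+x. ennreal (hbar (M n) \<epsilon> x) \<partial>measure_pmf (PX (fst c) n))" if c: "c \<in> C" for c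
    proof -
      have ci: "fst c < m" using c by (simp add: C_mem)
      have "ennreal (real n * mc c) * ennreal (measure_pmf.prob (PX (fst c) n) (Gl \<gamma> n (fst c))) =
          (\<integral>\<^sup>+x. ennreal (real n * mc c) * indicator (Gl \<gamma> n (fst c)) x \<partial>measure_pmf (PX (fst c) n))"
        by (simp add: nn_integral_cmult measure_pmf.emeasure_eq_measure)
      also have "\<dots> \<le> (\<integral>\<^sup>+x. ennreal (hbar (M n) \<epsilon> x) \<partial>measure_pmf (PX (fst c) n))"
      proof (intro nn_integral_mono_AE AE_pmfI)
        fix x assume x: "x \<in> set_pmf (PX (fst c) n)"
        then have len: "length x = n" using PX_supp_len[OF ci] by blast
        have h0: "0 \<le> hbar (M n) \<epsilon> x" using hbar_nonneg[OF eps(1) eps1 PXn_pos[OF len]] .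
        show "ennreal (real n * mc c) * indicator (Gl \<gamma> n (fst c)) x \<le> ennreal (hbar (M n) \<epsilon> x)"
        proof (cases "x \<in> Gl \<gamma> n (fst c)")
          case True
          have "real n * (A (fst c) - \<gamma>) \<le> hbar (M n) \<epsilon> x" by (rule hbar_low[OF eps ci True])
          then have "real n * mc c \<le> hbar (M n) \<epsilon> x" using h0 by (simp add: mc_def max_def)
          then show ?thesis using True by (simp add: ennreal_leI)
        qed simp
      qed
      finally show ?thesis .
    qed
    have "ennreal (r n) = (\<Sum>c\<in>C. ennreal (a c * mc c * measure_pmf.prob (PX (fst c) n) (Gl \<gamma> n (fst c))))"
      unfolding r_def by (rule sum_ennreal[symmetric]) (auto simp: a_nonneg mc_def)
    also have "\<dots> \<le> (\<Sum>c\<in>C. ennreal (1 / real n) * (ennreal (a c) * (\<integral>\<^sup>+x. ennreal (hbar (M n) \<epsilon> x) \<partial>measure_pmf (PX (fst c) n))))"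
    proof (rule sum_mono)
      fix c assume c: "c \<in> C"
      have "ennreal (a c * mc c * measure_pmf.prob (PX (fst c) n) (Gl \<gamma> n (fst c))) =
          ennreal (1 / real n) * (ennreal (a c) * (ennreal (real n * mc c) * ennreal (measure_pmf.prob (PX (fst c) n) (Gl \<gamma> n (fst c)))))"
        using n by (simp add: ennreal_mult[symmetric] a_nonneg mc_def)
      also have "\<dots> \<le> ennreal (1 / real n) * (ennreal (a c) * (\<integral>\<^sup>+x. ennreal (hbar (M n) \<epsilon> x) \<partial>measure_pmf (PX (fst c) n)))"
        using I[OF c] by (intro mult_left_mono) auto
      finally show "ennreal (a c * mc c * measure_pmf.prob (PX (fst c) n) (Gl \<gamma> n (fst c))) \<le> \<dots>" .
    qed
    also have "\<dots> = ennreal (1 / real n) * Hs_eps M \<epsilon> n"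
      unfolding Hs_eps_def nn_marg by (simp only: sum_distrib_left)
    finally show ?thesis .
  qed
  have rlim: "r \<longlonglongrightarrow> R"
  proof -
    have "(\<lambda>n. \<Sum>c\<in>C. a c * mc c * (1 - measure_pmf.prob (PX (fst c) n) {x. x \<notin> Gl \<gamma> n (fst c)})) \<longlonglongrightarrow> (\<Sum>c\<in>C. a c * mc c * (1 - 0))"
      using Gl_prob[OF _ g] by (intro tendsto_sum tendsto_mult tendsto_diff tendsto_const) (auto simp: C_mem)
    moreover have peq: "measure_pmf.prob (PX (fst c) n) (Gl \<gamma> n (fst c)) = 1 - measure_pmf.prob (PX (fst c) n) {x. x \<notin> Gl \<gamma> n (fst c)}" for c n
      using prob_not[of "PX (fst c) n" "\<lambda>x. x \<in> Gl \<gamma> n (fst c)"] by simp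
    have "r = (\<lambda>n. \<Sum>c\<in>C. a c * mc c * (1 - measure_pmf.prob (PX (fst c) n) {x. x \<notin> Gl \<gamma> n (fst c)}))"
      unfolding r_def by (rule ext, rule sum.cong[OF refl]) (subst peq, rule refl)
    ultimately show ?thesis unfolding R_def by simp
  qed
  have RT: "T - \<gamma> \<le> R"
  proof -
    have "T - \<gamma> = (\<Sum>c\<in>C. a c * A (fst c)) - \<gamma> * (\<Sum>c\<in>C. a c)"
      by (simp add: T_def sum_C_fst sum_a)
    also have "\<dots> = (\<Sum>c\<in>C. a c * (A (fst c) - \<gamma>))"
      by (simp add: sum_distrib_left sum_subtractf algebra_simps)
    also have "\<dots> \<le> R" unfolding R_def mc_def by (intro sum_mono mult_left_mono) (auto simp: a_nonneg)
    finally show ?thesis .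
  qed
  have "eventually (\<lambda>n. R - \<gamma> < r n) sequentially" using rlim g by (intro order_tendstoD) auto
  with eventually_ge_at_top[of 1]
  show ?thesis
  proof eventually_elim
    case (elim n)
    have "ennreal (T - 2 * \<gamma>) \<le> ennreal (r n)" using elim RT by (intro ennreal_leI) linarith
    also have "\<dots> \<le> ennreal (1 / real n) * Hs_eps M \<epsilon> n" by (rule r_le[OF elim(1)])
    finally show ?case .
  qed
qed

end

context mixsrc begin

definition Gu :: "real \<Rightarrow> real \<Rightarrow> nat \<Rightarrow> nat \<Rightarrow> 'x list set" where
  "Gu \<gamma> \<epsilon> n i = {x. own n i x \<and> (\<forall>l<mm i. measure_pmf.prob (W i l n x) {y. real n * (A i + \<gamma>) < Lf (M n) (x, y)} \<le> \<epsilon> / 2)}"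

lemma PXn_ge_ai: assumes i: "i < m" shows "ai i * pmf (PX i n) x \<le> pmf (map_pmf fst (M n)) x"
proof -
  have sub: "Sigma {i} (\<lambda>i. {..<mm i}) \<subseteq> C" using i by (auto simp: C_mem)
  have sg: "(\<Sum>c\<in>Sigma {i} (\<lambda>i. {..<mm i}). g c) = (\<Sum>j<mm i. g (i, j))" for g :: "nat \<times> nat \<Rightarrow> real"
  proof -
    have "Sigma {i} (\<lambda>i. {..<mm i}) = Pair i ` {..<mm i}" by auto
    then show ?thesis by (simp add: sum.reindex inj_on_def)
  qed
  have "ai i * pmf (PX i n) x = (\<Sum>c\<in>Sigma {i} (\<lambda>i. {..<mm i}). a c * pmf (PX (fst c) n) x)"
    unfolding sg by (simp add: ai_def a_def sum_distrib_right)
  also have "\<dots> \<le> (\<Sum>c\<in>C. a c * pmf (PX (fst c) n) x)"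
    by (rule sum_mono2[OF finC sub]) (auto simp: a_nonneg)
  also have "\<dots> = pmf (map_pmf fst (M n)) x" by (simp add: pmf_PXn)
  finally show ?thesis .
qed

lemma hbar_up:
  assumes eps: "0 < \<epsilon>" "\<epsilon> < 1" and i: "i < m" and x: "x \<in> Gu \<gamma> \<epsilon> n i"
    and small: "2 powr (- (real n * \<delta>)) \<le> \<epsilon> * ai i / 2"
  shows "hbar (M n) \<epsilon> x \<le> real n * (A i + \<gamma>)"
proof -
  have o: "own n i x" and pr: "\<And>l. l < mm i \<Longrightarrow> measure_pmf.prob (W i l n x) {y. real n * (A i + \<gamma>) < Lf (M n) (x, y)} \<le> \<epsilon> / 2"
    using x by (auto simp: Gu_def)
  have len: "length x = n" using o by (simp add: own_def)
  have PXn: "0 < pmf (map_pmf fst (M n)) x" using PXn_pos[OF len] .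
  define t where "t = real n * (A i + \<gamma>)"
  define pr' where "pr' c = measure_pmf.prob (W (fst c) (snd c) n x) {y. t < Lf (M n) (x, y)}" for c
  have trm: "a c * pmf (PX (fst c) n) x * pr' c \<le> \<epsilon> / 2 * (a c * pmf (PX (fst c) n) x) + 2 powr (- (real n * \<delta>)) * (a c * pmf (PX i n) x)"
    if c: "c \<in> C" for c
  proof (cases "fst c = i")
    case True
    have "pr' c \<le> \<epsilon> / 2" using pr[of "snd c"] c True by (simp add: pr'_def t_def C_mem)
    then have "a c * pmf (PX (fst c) n) x * pr' c \<le> a c * pmf (PX (fst c) n) x * (\<epsilon> / 2)"
      by (intro mult_left_mono) (auto simp: a_nonneg)
    then show ?thesis by (simp add: mult_ac add_increasing2 a_nonneg)
  next
    case False
    have k: "fst c < m" using c by (simp add: C_mem)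
    have "pr' c \<le> 1" by (simp add: pr'_def)
    then have "a c * pmf (PX (fst c) n) x * pr' c \<le> a c * pmf (PX (fst c) n) x"
      by (intro mult_left_le) (auto simp: pr'_def a_nonneg)
    also have "\<dots> \<le> a c * (2 powr (- (real n * \<delta>)) * pmf (PX i n) x)"
      using own_small[OF o k False] by (intro mult_left_mono) (auto simp: a_nonneg)
    finally have "a c * pmf (PX (fst c) n) x * pr' c \<le> 2 powr (- (real n * \<delta>)) * (a c * pmf (PX i n) x)"
      by (simp add: mult_ac)
    moreover have "0 \<le> \<epsilon> / 2 * (a c * pmf (PX (fst c) n) x)" using eps by (simp add: a_nonneg)
    ultimately show ?thesis by linarith
  qed
  have "measure_pmf.prob (M n) {p. fst p = x \<and> t < Lf (M n) p} = (\<Sum>c\<in>C. a c * pmf (PX (fst c) n) x * pr' c)"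
    unfolding prob_M_fst pr'_def ..
  also have "\<dots> \<le> (\<Sum>c\<in>C. \<epsilon> / 2 * (a c * pmf (PX (fst c) n) x) + 2 powr (- (real n * \<delta>)) * (a c * pmf (PX i n) x))"
    by (rule sum_mono) (rule trm)
  also have "\<dots> = \<epsilon> / 2 * pmf (map_pmf fst (M n)) x + 2 powr (- (real n * \<delta>)) * pmf (PX i n) x"
  proof -
    have e1: "(\<Sum>c\<in>C. \<epsilon> / 2 * (a c * pmf (PX (fst c) n) x)) = \<epsilon> / 2 * pmf (map_pmf fst (M n)) x"
      by (subst sum_distrib_left[symmetric]) (simp only: pmf_PXn)
    have e2: "(\<Sum>c\<in>C. 2 powr (- (real n * \<delta>)) * (a c * pmf (PX i n) x)) = 2 powr (- (real n * \<delta>)) * pmf (PX i n) x"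
      by (subst sum_distrib_left[symmetric]) (simp add: sum_distrib_right[symmetric] sum_a)
    show ?thesis by (simp only: sum.distrib e1 e2)
  qed
  also have "2 powr (- (real n * \<delta>)) * pmf (PX i n) x \<le> \<epsilon> / 2 * pmf (map_pmf fst (M n)) x"
  proof -
    have "2 powr (- (real n * \<delta>)) * pmf (PX i n) x \<le> \<epsilon> * ai i / 2 * pmf (PX i n) x"
      using small by (intro mult_right_mono) auto
    also have "\<dots> = \<epsilon> / 2 * (ai i * pmf (PX i n) x)" by simp
    also have "\<dots> \<le> \<epsilon> / 2 * pmf (map_pmf fst (M n)) x"
      using PXn_ge_ai[OF i] eps by (intro mult_left_mono) auto
    finally show ?thesis .
  qed
  finally have "measure_pmf.prob (M n) {p. fst p = x \<and> t < Lf (M n) p} \<le> \<epsilon> * pmf (map_pmf fst (M n)) x"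
    by simp
  then have "cp (M n) x t \<le> \<epsilon>" using PXn by (simp add: cp_def pos_divide_le_eq)
  then show ?thesis unfolding t_def[symmetric] by (rule hbar_le[OF _ eps(2) PXn])
qed

lemma Gu_prob:
  assumes i: "i < m" and g: "\<gamma> > 0" and eps: "0 < \<epsilon>"
  shows "(\<lambda>n. measure_pmf.prob (PX i n) {x. x \<notin> Gu \<gamma> \<epsilon> n i}) \<longlonglongrightarrow> 0"
proof -
  define L where "L = {..<mm i}"
  have finL: "finite L" by (simp add: L_def)
  define Q where "Q n p \<longleftrightarrow> real n * (A i + \<gamma>) < Lf (M n) p" for n p
  have Jc: "J n (i, l) = joint_src (PX i) (W i l) n" for n l by (simp add: J_def)
  have b1: "measure_pmf.prob (PX i n) {x. x \<notin> Gu \<gamma> \<epsilon> n i} \<le>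
      measure_pmf.prob (PX i n) {x. \<not> own n i x} + (\<Sum>l\<in>L. measure_pmf.prob (PX i n) {x. \<epsilon> / 2 \<le> measure_pmf.prob (W i l n x) {y. Q n (x, y)}})" for n
  proof -
    have "measure_pmf.prob (PX i n) {x. x \<notin> Gu \<gamma> \<epsilon> n i} \<le>
        measure_pmf.prob (PX i n) ({x. \<not> own n i x} \<union> (\<Union>l\<in>L. {x. \<epsilon> / 2 \<le> measure_pmf.prob (W i l n x) {y. Q n (x, y)}}))"
      by (intro measure_pmf.finite_measure_mono) (auto simp: Gu_def Q_def L_def not_le less_imp_le)
    also have "\<dots> \<le> measure_pmf.prob (PX i n) {x. \<not> own n i x} + measure_pmf.prob (PX i n) (\<Union>l\<in>L. {x. \<epsilon> / 2 \<le> measure_pmf.prob (W i l n x) {y. Q n (x, y)}})"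
      by (rule measure_Un_le) auto
    also have "measure_pmf.prob (PX i n) (\<Union>l\<in>L. {x. \<epsilon> / 2 \<le> measure_pmf.prob (W i l n x) {y. Q n (x, y)}}) \<le>
        (\<Sum>l\<in>L. measure_pmf.prob (PX i n) {x. \<epsilon> / 2 \<le> measure_pmf.prob (W i l n x) {y. Q n (x, y)}})"
      by (rule measure_pmf.finite_measure_subadditive_finite[OF finL]) auto
    finally show ?thesis by simp
  qed
  have b2: "measure_pmf.prob (PX i n) {x. \<epsilon> / 2 \<le> measure_pmf.prob (W i l n x) {y. Q n (x, y)}}
      \<le> measure_pmf.prob (J n (i, l)) {p. Q n p} / (\<epsilon> / 2)" for n l
    using markov_x[of "\<epsilon>/2" "PX i" n "W i l" "Q n"] eps by (simp add: Jc)
  have b3: "eventually (\<lambda>n. \<forall>l\<in>L. measure_pmf.prob (J n (i, l)) {p. Q n p} \<le>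
      measure_pmf.prob (Sc (i, l) n) {p. Hc (i, l) + \<gamma> / 3 < Zfun (Sc (i, l)) n p} + 2 powr (- (real n * (\<gamma> / 3)))) sequentially"
  proof (rule eventually_ball_finite[OF finL], rule ballI)
    fix l assume l: "l \<in> L"
    define c where "c = (i, l)"
    have c: "c \<in> C" using i l by (simp add: C_mem c_def L_def)
    have HA: "Hc c \<le> A i" using A_ge l by (simp add: c_def L_def)
    have "eventually (\<lambda>n. log 2 (1 / a c) \<le> real n * (\<gamma> / 3) \<and> n \<ge> 1) sequentially"
    proof -
      obtain N :: nat where N: "log 2 (1 / a c) / (\<gamma> / 3) \<le> real N" using real_arch_simple by blast
      have "log 2 (1 / a c) \<le> real n * (\<gamma> / 3)" if "n \<ge> N" for n
      proof -
        have "log 2 (1 / a c) / (\<gamma> / 3) \<le> real n" using N that by linarith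
        then show ?thesis using g by (simp add: pos_divide_le_eq)
      qed
      then show ?thesis unfolding eventually_sequentially by (intro exI[of _ "max N 1"]) auto
    qed
    then show "eventually (\<lambda>n. measure_pmf.prob (J n (i, l)) {p. Q n p} \<le>
      measure_pmf.prob (Sc (i, l) n) {p. Hc (i, l) + \<gamma> / 3 < Zfun (Sc (i, l)) n p} + 2 powr (- (real n * (\<gamma> / 3)))) sequentially"
    proof eventually_elim
      case (elim n)
      let ?ratio = "\<lambda>p. log 2 (pmf (map_pmf snd (M n)) (snd p) / pmf (map_pmf snd (J n c)) (snd p))"
      have "measure_pmf.prob (J n c) {p. Q n p} \<le>
          measure_pmf.prob (J n c) ({p. Hc c + \<gamma> / 3 < Zfun (Sc c) n p} \<union> {p. real n * (\<gamma> / 3) < ?ratio p})"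
      proof (rule prob_mono_supp)
        fix p assume ps: "p \<in> set_pmf (J n c)" and pq: "p \<in> {p. Q n p}"
        show "p \<in> {p. Hc c + \<gamma> / 3 < Zfun (Sc c) n p} \<union> {p. real n * (\<gamma> / 3) < ?ratio p}"
        proof (rule ccontr)
          assume "\<not> ?thesis"
          then have h1: "Zfun (Sc c) n p \<le> Hc c + \<gamma> / 3" and h2: "?ratio p \<le> real n * (\<gamma> / 3)" by auto
          have pp: "pmf (J n c) p > 0" using ps by (simp add: set_pmf_eq')
          have up: "Lf (M n) p \<le> Lf (J n c) p + log 2 (1 / a c) + ?ratio p"
            by (rule Lf_upper[OF M_dom a_pos[OF c] pp])
          have "Lf (J n c) p = real n * Zfun (Sc c) n p" using elim by (simp add: Zfun_Lf J_Sc)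
          also have "\<dots> \<le> real n * (Hc c + \<gamma> / 3)" using h1 by (intro mult_left_mono) auto
          finally have "Lf (M n) p \<le> real n * (Hc c + \<gamma> / 3) + real n * (\<gamma> / 3) + real n * (\<gamma> / 3)"
            using up elim(1) h2 by linarith
          also have "\<dots> = real n * (Hc c + \<gamma>)" by (simp add: algebra_simps)
          also have "\<dots> \<le> real n * (A i + \<gamma>)" using HA by (intro mult_left_mono) auto
          finally show False using pq by (simp add: Q_def)
        qed
      qed
      also have "\<dots> \<le> measure_pmf.prob (J n c) {p. Hc c + \<gamma> / 3 < Zfun (Sc c) n p} + measure_pmf.prob (J n c) {p. real n * (\<gamma> / 3) < ?ratio p}"
        by (rule measure_Un_le) auto
      also have "measure_pmf.prob (J n c) {p. real n * (\<gamma> / 3) < ?ratio p} =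
          measure_pmf.prob (map_pmf snd (J n c)) {y. real n * (\<gamma> / 3) < log 2 (pmf (map_pmf snd (M n)) y / pmf (map_pmf snd (J n c)) y)}"
        by (simp add: measure_map_pmf vimage_def)
      also have "\<dots> \<le> 2 powr (- (real n * (\<gamma> / 3)))" by (rule markov_ratio)
      finally show ?case by (simp add: J_Sc c_def)
    qed
  qed
  define bnd where "bnd n = measure_pmf.prob (PX i n) {x. \<not> own n i x} + (\<Sum>l\<in>L. (measure_pmf.prob (Sc (i, l) n) {p. Hc (i, l) + \<gamma> / 3 < Zfun (Sc (i, l)) n p} + 2 powr (- (real n * (\<gamma> / 3)))) / (\<epsilon> / 2))" for n
  have lim: "bnd \<longlonglongrightarrow> 0 + (\<Sum>l\<in>L. (0 + 0) / (\<epsilon> / 2))"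
    unfolding bnd_def
    using own_prob[OF i] powr_neg_lim[of "\<gamma>/3"] g Hc_spec(2)[of _ "\<gamma>/3"] i eps
    by (intro tendsto_add tendsto_sum tendsto_divide tendsto_const) (auto simp: C_mem L_def)
  have lim': "bnd \<longlonglongrightarrow> 0" using lim by simp
  show ?thesis
  proof (rule tendsto_sandwich[OF _ _ tendsto_const lim'])
    show "eventually (\<lambda>n. 0 \<le> measure_pmf.prob (PX i n) {x. x \<notin> Gu \<gamma> \<epsilon> n i}) sequentially" by simp
    show "eventually (\<lambda>n. measure_pmf.prob (PX i n) {x. x \<notin> Gu \<gamma> \<epsilon> n i} \<le> bnd n) sequentially"
      using b3
    proof eventually_elim
      case (elim n)
      have "(\<Sum>l\<in>L. measure_pmf.prob (PX i n) {x. \<epsilon> / 2 \<le> measure_pmf.prob (W i l n x) {y. Q n (x, y)}}) \<le>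
          (\<Sum>l\<in>L. (measure_pmf.prob (Sc (i, l) n) {p. Hc (i, l) + \<gamma> / 3 < Zfun (Sc (i, l)) n p} + 2 powr (- (real n * (\<gamma> / 3)))) / (\<epsilon> / 2))"
      proof (rule sum_mono)
        fix l assume l: "l \<in> L"
        show "measure_pmf.prob (PX i n) {x. \<epsilon> / 2 \<le> measure_pmf.prob (W i l n x) {y. Q n (x, y)}} \<le>
          (measure_pmf.prob (Sc (i, l) n) {p. Hc (i, l) + \<gamma> / 3 < Zfun (Sc (i, l)) n p} + 2 powr (- (real n * (\<gamma> / 3)))) / (\<epsilon> / 2)"
          using b2[of n l] elim l eps by (meson divide_right_mono dual_order.trans half_gt_zero less_imp_le)
      qed
      then show ?case using b1[of n] unfolding bnd_def by linarith
    qed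
  qed
qed

end

lemma swap_fst:
  "(\<integral>\<^sup>+x. \<integral>\<^sup>+p. indicator {p. fst p = x} p * h p \<partial>measure_pmf P \<partial>count_space UNIV) = (\<integral>\<^sup>+p. h p \<partial>measure_pmf P)"
proof -
  have "(\<integral>\<^sup>+x. \<integral>\<^sup>+p. indicator {p. fst p = x} p * h p \<partial>measure_pmf P \<partial>count_space UNIV) =
      (\<integral>\<^sup>+x. \<integral>\<^sup>+p. ennreal (pmf P p) * (indicator {p. fst p = x} p * h p) \<partial>count_space UNIV \<partial>count_space UNIV)"
    by (simp add: nn_integral_measure_pmf)
  also have "\<dots> = (\<integral>\<^sup>+q. ennreal (pmf P (snd q)) * (indicator {p. fst p = fst q} (snd q) * h (snd q)) \<partial>count_space UNIV)"
    by (subst nn_integral_fst_count_space[symmetric]) simp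
  also have "\<dots> = (\<integral>\<^sup>+p. \<integral>\<^sup>+x. ennreal (pmf P p) * (indicator {p. fst p = x} p * h p) \<partial>count_space UNIV \<partial>count_space UNIV)"
    by (subst nn_integral_snd_count_space[symmetric]) simp
  also have "\<dots> = (\<integral>\<^sup>+p. \<integral>\<^sup>+x. indicator {fst p} x * (ennreal (pmf P p) * h p) \<partial>count_space UNIV \<partial>count_space UNIV)"
    by (intro nn_integral_cong) (auto simp: indicator_def)
  also have "\<dots> = (\<integral>\<^sup>+p. ennreal (pmf P p) * h p \<partial>count_space UNIV)"
    by (simp only: nn_count_single')
  also have "\<dots> = (\<integral>\<^sup>+p. h p \<partial>measure_pmf P)" by (simp add: nn_integral_measure_pmf)
  finally show ?thesis .
qed

context mixsrc begin

definition Gall :: "real \<Rightarrow> real \<Rightarrow> nat \<Rightarrow> 'x list set" where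
  "Gall \<gamma> \<epsilon> n = {x. \<exists>i<m. x \<in> Gu \<gamma> \<epsilon> n i}"

lemma bad_Z:
  assumes c: "c \<in> C" and g: "\<gamma> > 0" and eps: "0 < \<epsilon>"
  shows "(\<lambda>n. \<integral>\<^sup>+p. ennreal (Zfun (Sc c) n p) * indicator {p. fst p \<notin> Gall \<gamma> \<epsilon> n} p \<partial>measure_pmf (Sc c n)) \<longlonglongrightarrow> 0"
proof (rule UI_small[OF UI_c[OF c]])
  have k: "fst c < m" using c by (simp add: C_mem)
  have eq: "measure_pmf.prob (Sc c n) {p. fst p \<notin> Gall \<gamma> \<epsilon> n} = measure_pmf.prob (PX (fst c) n) {x. x \<notin> Gall \<gamma> \<epsilon> n}" for n
  proof -
    have "measure_pmf.prob (PX (fst c) n) {x. x \<notin> Gall \<gamma> \<epsilon> n} = measure_pmf.prob (map_pmf fst (Sc c n)) {x. x \<notin> Gall \<gamma> \<epsilon> n}"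
      by (simp add: Sc_def map_fst_joint)
    also have "\<dots> = measure_pmf.prob (Sc c n) {p. fst p \<notin> Gall \<gamma> \<epsilon> n}"
      by (simp add: measure_map_pmf vimage_def)
    finally show ?thesis by simp
  qed
  show "(\<lambda>n. measure_pmf.prob (Sc c n) {p. fst p \<notin> Gall \<gamma> \<epsilon> n}) \<longlonglongrightarrow> 0"
    unfolding eq
  proof (rule tendsto0_sandwich_prob[OF Gu_prob[OF k g eps]])
    show "{x. x \<notin> Gall \<gamma> \<epsilon> n} \<subseteq> {x. x \<notin> Gu \<gamma> \<epsilon> n (fst c)}" for n using k by (auto simp: Gall_def)
  qed
qed

lemma good_part:
  assumes eps: "0 < \<epsilon>" "\<epsilon> < 1" and k: "k < m" and g: "\<gamma> > 0"
    and small: "\<forall>i<m. 2 powr (- (real n * \<delta>)) \<le> \<epsilon> * ai i / 2"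
  shows "(\<integral>\<^sup>+x. ennreal (hbar (M n) \<epsilon> x) * indicator (Gall \<gamma> \<epsilon> n) x \<partial>measure_pmf (PX k n)) \<le>
     ennreal (real n * (A k + \<gamma>)) + (\<Sum>i<m. ennreal (2 powr (- (real n * \<delta>)) * real n * (A i + \<gamma>)))"
proof -
  have pt: "ennreal (pmf (PX k n) x) * (ennreal (hbar (M n) \<epsilon> x) * indicator (Gall \<gamma> \<epsilon> n) x) \<le>
      ennreal (pmf (PX k n) x) * ennreal (real n * (A k + \<gamma>)) +
      (\<Sum>i<m. ennreal (2 powr (- (real n * \<delta>)) * real n * (A i + \<gamma>)) * ennreal (pmf (PX i n) x))" for x
  proof (cases "x \<in> Gall \<gamma> \<epsilon> n")
    case False then show ?thesis by simp
  next
    case True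
    then obtain i where i: "i < m" "x \<in> Gu \<gamma> \<epsilon> n i" by (auto simp: Gall_def)
    have hb: "hbar (M n) \<epsilon> x \<le> real n * (A i + \<gamma>)"
      using hbar_up[OF eps i small[rule_format, OF i(1)]] .
    have Ai: "0 \<le> A i + \<gamma>" using A_nonneg[OF i(1)] g by simp
    show ?thesis
    proof (cases "i = k")
      case True
      have "ennreal (pmf (PX k n) x) * (ennreal (hbar (M n) \<epsilon> x) * indicator (Gall \<gamma> \<epsilon> n) x) \<le>
          ennreal (pmf (PX k n) x) * ennreal (real n * (A k + \<gamma>))"
        using hb True \<open>x \<in> Gall \<gamma> \<epsilon> n\<close> by (auto intro!: mult_left_mono ennreal_leI)
      then show ?thesis by (simp add: add_increasing2)
    next
      case False
      have o: "own n i x" using i by (simp add: Gu_def)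
      have Pk: "pmf (PX k n) x \<le> 2 powr (- (real n * \<delta>)) * pmf (PX i n) x"
        using own_small[OF o k] False by simp
      have "pmf (PX k n) x * hbar (M n) \<epsilon> x \<le> pmf (PX k n) x * (real n * (A i + \<gamma>))"
        using hb by (intro mult_left_mono) auto
      also have "\<dots> \<le> 2 powr (- (real n * \<delta>)) * pmf (PX i n) x * (real n * (A i + \<gamma>))"
        using Pk Ai by (intro mult_right_mono) auto
      finally have r: "pmf (PX k n) x * hbar (M n) \<epsilon> x \<le> 2 powr (- (real n * \<delta>)) * real n * (A i + \<gamma>) * pmf (PX i n) x"
        by (simp add: mult_ac)
      have "ennreal (pmf (PX k n) x) * (ennreal (hbar (M n) \<epsilon> x) * indicator (Gall \<gamma> \<epsilon> n) x) \<le>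
          ennreal (pmf (PX k n) x * max 0 (hbar (M n) \<epsilon> x))"
        by (simp add: ennreal_mult indicator_def ennreal_max_0)
      also have "\<dots> \<le> ennreal (2 powr (- (real n * \<delta>)) * real n * (A i + \<gamma>) * pmf (PX i n) x)"
        using r Ai by (intro ennreal_leI) (auto simp: max_def intro!: mult_nonneg_nonneg)
      also have "\<dots> = ennreal (2 powr (- (real n * \<delta>)) * real n * (A i + \<gamma>)) * ennreal (pmf (PX i n) x)"
        using Ai by (simp add: ennreal_mult)
      also have "\<dots> \<le> (\<Sum>i<m. ennreal (2 powr (- (real n * \<delta>)) * real n * (A i + \<gamma>)) * ennreal (pmf (PX i n) x))"
        using i(1) by (intro member_le_sum[where f="\<lambda>i. ennreal (2 powr (- (real n * \<delta>)) * real n * (A i + \<gamma>)) * ennreal (pmf (PX i n) x)"]) auto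
      finally show ?thesis by (simp add: add_increasing)
    qed
  qed
  have "(\<integral>\<^sup>+x. ennreal (hbar (M n) \<epsilon> x) * indicator (Gall \<gamma> \<epsilon> n) x \<partial>measure_pmf (PX k n)) \<le>
      (\<integral>\<^sup>+x. ennreal (pmf (PX k n) x) * ennreal (real n * (A k + \<gamma>)) +
      (\<Sum>i<m. ennreal (2 powr (- (real n * \<delta>)) * real n * (A i + \<gamma>)) * ennreal (pmf (PX i n) x)) \<partial>count_space UNIV)"
    unfolding nn_integral_measure_pmf by (intro nn_integral_mono pt)
  also have "\<dots> = ennreal (real n * (A k + \<gamma>)) + (\<Sum>i<m. ennreal (2 powr (- (real n * \<delta>)) * real n * (A i + \<gamma>)))"
    by (simp add: nn_integral_add nn_integral_sum nn_integral_cmult nn_integral_multc nn_integral_pmf_eq_1)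
  finally show ?thesis .
qed

lemma bad_part:
  assumes eps: "0 < \<epsilon>" "\<epsilon> < 1"
  shows "(\<integral>\<^sup>+x. ennreal (hbar (M n) \<epsilon> x) * indicator (- Gall \<gamma> \<epsilon> n) x \<partial>measure_pmf (map_pmf fst (M n))) \<le>
     ennreal (1 / \<epsilon>) * (\<integral>\<^sup>+p. ennreal (Lf (M n) p) * indicator {p. fst p \<notin> Gall \<gamma> \<epsilon> n} p \<partial>measure_pmf (M n))"
proof -
  define h where "h p = ennreal (Lf (M n) p) * indicator {p. fst p \<notin> Gall \<gamma> \<epsilon> n} p" for p
  have pt: "ennreal (pmf (map_pmf fst (M n)) x) * (ennreal (hbar (M n) \<epsilon> x) * indicator (- Gall \<gamma> \<epsilon> n) x) \<le>
     ennreal (1 / \<epsilon>) * (\<integral>\<^sup>+p. indicator {p. fst p = x} p * h p \<partial>measure_pmf (M n))" for x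
  proof (cases "pmf (map_pmf fst (M n)) x > 0 \<and> x \<notin> Gall \<gamma> \<epsilon> n")
    case False
    then have "pmf (map_pmf fst (M n)) x = 0 \<or> x \<in> Gall \<gamma> \<epsilon> n" using pmf_nonneg[of "map_pmf fst (M n)" x] by auto
    then show ?thesis by auto
  next
    case True
    have h0: "0 \<le> hbar (M n) \<epsilon> x" using hbar_nonneg[OF eps, of "M n" x] True by simp
    have mk: "ennreal (\<epsilon> * pmf (map_pmf fst (M n)) x * hbar (M n) \<epsilon> x) \<le>
        (\<integral>\<^sup>+p. indicator {p. fst p = x} p * ennreal (Lf (M n) p) \<partial>measure_pmf (M n))"
      using hbar_markov[OF eps, of "M n" x] True by simp
    have "(\<integral>\<^sup>+p. indicator {p. fst p = x} p * ennreal (Lf (M n) p) \<partial>measure_pmf (M n)) =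
        (\<integral>\<^sup>+p. indicator {p. fst p = x} p * h p \<partial>measure_pmf (M n))"
      using True by (intro nn_integral_cong) (auto simp: h_def indicator_def)
    with mk have mk': "ennreal (\<epsilon> * pmf (map_pmf fst (M n)) x * hbar (M n) \<epsilon> x) \<le>
        (\<integral>\<^sup>+p. indicator {p. fst p = x} p * h p \<partial>measure_pmf (M n))" by simp
    have "ennreal (pmf (map_pmf fst (M n)) x) * (ennreal (hbar (M n) \<epsilon> x) * indicator (- Gall \<gamma> \<epsilon> n) x) =
        ennreal (1 / \<epsilon>) * ennreal (\<epsilon> * pmf (map_pmf fst (M n)) x * hbar (M n) \<epsilon> x)"
      using True eps h0 by (simp add: ennreal_mult[symmetric])
    also have "\<dots> \<le> ennreal (1 / \<epsilon>) * (\<integral>\<^sup>+p. indicator {p. fst p = x} p * h p \<partial>measure_pmf (M n))"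
      using mk' by (intro mult_left_mono) auto
    finally show ?thesis .
  qed
  have "(\<integral>\<^sup>+x. ennreal (hbar (M n) \<epsilon> x) * indicator (- Gall \<gamma> \<epsilon> n) x \<partial>measure_pmf (map_pmf fst (M n))) \<le>
      (\<integral>\<^sup>+x. ennreal (1 / \<epsilon>) * (\<integral>\<^sup>+p. indicator {p. fst p = x} p * h p \<partial>measure_pmf (M n)) \<partial>count_space UNIV)"
    unfolding nn_integral_measure_pmf[of "map_pmf fst (M n)"] by (intro nn_integral_mono pt)
  also have "\<dots> = ennreal (1 / \<epsilon>) * (\<integral>\<^sup>+p. h p \<partial>measure_pmf (M n))"
    by (simp add: nn_integral_cmult swap_fst)
  finally show ?thesis by (simp add: h_def)
qed

end

context mixsrc begin

definition ec :: "real \<Rightarrow> real \<Rightarrow> nat \<times> nat \<Rightarrow> nat \<Rightarrow> ennreal" where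
  "ec \<gamma> \<epsilon> c n = (\<integral>\<^sup>+p. ennreal (Zfun (Sc c) n p) * indicator {p. fst p \<notin> Gall \<gamma> \<epsilon> n} p \<partial>measure_pmf (Sc c n))"

definition Lc :: "nat \<times> nat \<Rightarrow> real" where "Lc c = log 2 (1 / a c) + 1 / ln 2"

lemma Lc_nonneg: "c \<in> C \<Longrightarrow> 0 \<le> Lc c"
  using a_pos[of c] a_le1[of c] by (simp add: Lc_def)

lemma Lf_M_bad:
  assumes n: "n \<ge> 1"
  shows "(\<integral>\<^sup>+p. ennreal (Lf (M n) p) * indicator {p. fst p \<notin> Gall \<gamma> \<epsilon> n} p \<partial>measure_pmf (M n)) \<le>
     (\<Sum>c\<in>C. ennreal (a c) * (ennreal (real n) * ec \<gamma> \<epsilon> c n + ennreal (Lc c)))"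
  unfolding nn_M
proof (rule sum_mono)
  fix c assume c: "c \<in> C"
  have "(\<integral>\<^sup>+p. ennreal (Lf (M n) p) * indicator {p. fst p \<notin> Gall \<gamma> \<epsilon> n} p \<partial>measure_pmf (J n c)) \<le>
      (\<integral>\<^sup>+p. ennreal (Lf (J n c) p) * indicator {p. fst p \<notin> Gall \<gamma> \<epsilon> n} p \<partial>measure_pmf (J n c)) + ennreal (log 2 (1 / a c)) + ennreal (1 / ln 2)"
    by (rule nn_Lf_mix_bound[OF M_dom a_pos[OF c] a_le1])
  also have "(\<integral>\<^sup>+p. ennreal (Lf (J n c) p) * indicator {p. fst p \<notin> Gall \<gamma> \<epsilon> n} p \<partial>measure_pmf (J n c)) = ennreal (real n) * ec \<gamma> \<epsilon> c n"
  proof -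
    have "ennreal (Lf (J n c) p) = ennreal (real n) * ennreal (Zfun (Sc c) n p)" for p
      using n by (simp add: Zfun_Lf J_Sc ennreal_mult[symmetric] Lf_nonneg)
    then show ?thesis unfolding ec_def J_Sc by (simp add: nn_integral_cmult mult.assoc)
  qed
  also have "ennreal (real n) * ec \<gamma> \<epsilon> c n + ennreal (log 2 (1 / a c)) + ennreal (1 / ln 2) = ennreal (real n) * ec \<gamma> \<epsilon> c n + ennreal (Lc c)"
    using a_pos[OF c] a_le1[of c] by (simp add: Lc_def ennreal_plus add.assoc)
  finally show "ennreal (a c) * (\<integral>\<^sup>+p. ennreal (Lf (M n) p) * indicator {p. fst p \<notin> Gall \<gamma> \<epsilon> n} p \<partial>measure_pmf (J n c)) \<le>
     ennreal (a c) * (ennreal (real n) * ec \<gamma> \<epsilon> c n + ennreal (Lc c))"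
    by (intro mult_left_mono) auto
qed

lemma ennreal_distr3: "0 \<le> u \<Longrightarrow> 0 \<le> X \<Longrightarrow> 0 \<le> Y \<Longrightarrow> ennreal u * (ennreal X + ennreal Y) = ennreal (u * (X + Y))"
  by (simp add: ennreal_plus[symmetric] ennreal_mult[symmetric] del: ennreal_plus)

lemma T_nonneg: "0 \<le> T"
  unfolding T_def using ai_pos A_nonneg by (intro sum_nonneg mult_nonneg_nonneg) (auto simp: less_imp_le)

lemma upper_bound:
  assumes eps: "0 < \<epsilon>" "\<epsilon> < 1" and g: "\<gamma> > 0"
  shows "eventually (\<lambda>n. ennreal (1 / real n) * Hs_eps M \<epsilon> n \<le> ennreal (T + 3 * \<gamma>)) sequentially"
proof -
  define K where "K = (\<Sum>i<m. A i + \<gamma>)"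
  define L where "L = (\<Sum>c\<in>C. a c * Lc c)"
  define \<eta> where "\<eta> = \<epsilon> * \<gamma>"
  have K0: "0 \<le> K" unfolding K_def using A_nonneg g by (intro sum_nonneg) (auto intro: add_nonneg_nonneg less_imp_le)
  have L0: "0 \<le> L" unfolding L_def using Lc_nonneg by (intro sum_nonneg) (auto simp: a_nonneg)
  have \<eta>: "0 < \<eta>" using eps g by (simp add: \<eta>_def)
  have E2: "eventually (\<lambda>n. \<forall>i\<in>{..<m}. 2 powr (- (real n * \<delta>)) < \<epsilon> * ai i / 2) sequentially"
    using powr_neg_lim[OF delta(1)] ai_pos eps
    by (intro eventually_ball_finite ballI order_tendstoD(2)) auto
  have \<eta>': "0 < ennreal \<eta>" using \<eta> by simp
  have E3: "eventually (\<lambda>n. \<forall>c\<in>C. ec \<gamma> \<epsilon> c n < ennreal \<eta>) sequentially"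
  proof (rule eventually_ball_finite[OF finC], rule ballI)
    fix c assume c: "c \<in> C"
    have "(\<lambda>n. ec \<gamma> \<epsilon> c n) \<longlonglongrightarrow> 0" unfolding ec_def by (rule bad_Z[OF c g eps(1)])
    then show "eventually (\<lambda>n. ec \<gamma> \<epsilon> c n < ennreal \<eta>) sequentially" using \<eta>' by (rule order_tendstoD(2))
  qed
  have "(\<lambda>n. 2 powr (- (real n * \<delta>)) * K + L / \<epsilon> * (1 / real n)) \<longlonglongrightarrow> 0 * K + L / \<epsilon> * 0"
    by (intro tendsto_add tendsto_mult tendsto_const powr_neg_lim[OF delta(1)] lim_const_over_n[of 1, simplified])
  then have E4: "eventually (\<lambda>n. 2 powr (- (real n * \<delta>)) * K + L / \<epsilon> * (1 / real n) < \<gamma>) sequentially"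
    using g by (intro order_tendstoD(2)) auto
  have E1: "eventually (\<lambda>n. n \<ge> 1) sequentially" by (rule eventually_ge_at_top)
  from E1 E2 E3 E4 show ?thesis
  proof eventually_elim
    case (elim n)
    have n: "n \<ge> 1" using elim(1) .
    have small: "\<forall>i<m. 2 powr (- (real n * \<delta>)) \<le> \<epsilon> * ai i / 2" using elim(2) by (auto intro: less_imp_le)
    define G where "G = Gall \<gamma> \<epsilon> n"
    have split: "Hs_eps M \<epsilon> n = (\<integral>\<^sup>+x. ennreal (hbar (M n) \<epsilon> x) * indicator G x \<partial>measure_pmf (map_pmf fst (M n))) +
        (\<integral>\<^sup>+x. ennreal (hbar (M n) \<epsilon> x) * indicator (- G) x \<partial>measure_pmf (map_pmf fst (M n)))"
      unfolding Hs_eps_def by (subst nn_integral_add[symmetric]) (auto intro!: nn_integral_cong simp: indicator_def)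
    have I1: "(\<integral>\<^sup>+x. ennreal (hbar (M n) \<epsilon> x) * indicator G x \<partial>measure_pmf (map_pmf fst (M n))) \<le>
        ennreal (real n * (T + \<gamma>) + 2 powr (- (real n * \<delta>)) * real n * K)"
    proof -
      have "(\<integral>\<^sup>+x. ennreal (hbar (M n) \<epsilon> x) * indicator G x \<partial>measure_pmf (map_pmf fst (M n))) \<le>
          (\<Sum>c\<in>C. ennreal (a c) * (ennreal (real n * (A (fst c) + \<gamma>)) + (\<Sum>i<m. ennreal (2 powr (- (real n * \<delta>)) * real n * (A i + \<gamma>)))))"
        unfolding nn_marg G_def
        by (intro sum_mono mult_left_mono good_part[OF eps _ g small]) (auto simp: C_mem)
      also have "\<dots> = (\<Sum>c\<in>C. ennreal (a c * (real n * (A (fst c) + \<gamma>) + 2 powr (- (real n * \<delta>)) * real n * K)))"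
      proof (rule sum.cong[OF refl])
        fix c assume c: "c \<in> C"
        have A0: "0 \<le> A (fst c)" using A_nonneg c by (simp add: C_mem)
        have "(\<Sum>i<m. ennreal (2 powr (- (real n * \<delta>)) * real n * (A i + \<gamma>))) = ennreal (\<Sum>i<m. 2 powr (- (real n * \<delta>)) * real n * (A i + \<gamma>))"
          using A_nonneg g by (intro sum_ennreal) (auto intro!: mult_nonneg_nonneg add_nonneg_nonneg simp: less_imp_le)
        also have "(\<Sum>i<m. 2 powr (- (real n * \<delta>)) * real n * (A i + \<gamma>)) = 2 powr (- (real n * \<delta>)) * real n * K"
          by (simp add: K_def sum_distrib_left)
        finally have s1: "(\<Sum>i<m. ennreal (2 powr (- (real n * \<delta>)) * real n * (A i + \<gamma>))) = ennreal (2 powr (- (real n * \<delta>)) * real n * K)" .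
        show "ennreal (a c) * (ennreal (real n * (A (fst c) + \<gamma>)) + (\<Sum>i<m. ennreal (2 powr (- (real n * \<delta>)) * real n * (A i + \<gamma>)))) =
            ennreal (a c * (real n * (A (fst c) + \<gamma>) + 2 powr (- (real n * \<delta>)) * real n * K))"
          unfolding s1 using A0 g K0 by (intro ennreal_distr3) (auto simp: a_nonneg)
      qed
      also have "\<dots> = ennreal (\<Sum>c\<in>C. a c * (real n * (A (fst c) + \<gamma>) + 2 powr (- (real n * \<delta>)) * real n * K))"
        using A_nonneg g K0 by (intro sum_ennreal) (auto simp: C_mem a_nonneg intro!: mult_nonneg_nonneg add_nonneg_nonneg)
      also have "(\<Sum>c\<in>C. a c * (real n * (A (fst c) + \<gamma>) + 2 powr (- (real n * \<delta>)) * real n * K)) =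
          real n * (\<Sum>c\<in>C. a c * A (fst c)) + real n * \<gamma> * (\<Sum>c\<in>C. a c) + 2 powr (- (real n * \<delta>)) * real n * K * (\<Sum>c\<in>C. a c)"
        by (simp add: algebra_simps sum.distrib sum_distrib_left sum_distrib_right)
      also have "\<dots> = real n * (T + \<gamma>) + 2 powr (- (real n * \<delta>)) * real n * K"
        by (simp add: sum_a sum_C_fst T_def algebra_simps)
      finally show ?thesis .
    qed
    have I2: "(\<integral>\<^sup>+x. ennreal (hbar (M n) \<epsilon> x) * indicator (- G) x \<partial>measure_pmf (map_pmf fst (M n))) \<le>
        ennreal ((real n * \<eta> + L) / \<epsilon>)"
    proof -
      have "(\<integral>\<^sup>+x. ennreal (hbar (M n) \<epsilon> x) * indicator (- G) x \<partial>measure_pmf (map_pmf fst (M n))) \<le>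
          ennreal (1 / \<epsilon>) * (\<Sum>c\<in>C. ennreal (a c) * (ennreal (real n) * ec \<gamma> \<epsilon> c n + ennreal (Lc c)))"
        unfolding G_def using bad_part[OF eps] Lf_M_bad[OF n]
        by (meson mult_left_mono order_trans zero_le)
      also have "\<dots> \<le> ennreal (1 / \<epsilon>) * (\<Sum>c\<in>C. ennreal (a c) * (ennreal (real n) * ennreal \<eta> + ennreal (Lc c)))"
        using elim(3) by (intro mult_left_mono sum_mono add_right_mono) (auto intro: less_imp_le)
      also have "\<dots> = ennreal (1 / \<epsilon>) * ennreal (\<Sum>c\<in>C. a c * (real n * \<eta> + Lc c))"
      proof -
        have "(\<Sum>c\<in>C. ennreal (a c) * (ennreal (real n) * ennreal \<eta> + ennreal (Lc c))) = (\<Sum>c\<in>C. ennreal (a c * (real n * \<eta> + Lc c)))"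
        proof (intro sum.cong refl)
          fix c assume c: "c \<in> C"
          have "ennreal (real n) * ennreal \<eta> = ennreal (real n * \<eta>)" using \<eta> by (simp add: ennreal_mult)
          then show "ennreal (a c) * (ennreal (real n) * ennreal \<eta> + ennreal (Lc c)) = ennreal (a c * (real n * \<eta> + Lc c))"
            using \<eta> Lc_nonneg[OF c] by (simp only:) (rule ennreal_distr3, auto simp: a_nonneg)
        qed
        also have "\<dots> = ennreal (\<Sum>c\<in>C. a c * (real n * \<eta> + Lc c))"
          using \<eta> Lc_nonneg by (intro sum_ennreal) (auto simp: a_nonneg intro!: mult_nonneg_nonneg add_nonneg_nonneg)
        finally show ?thesis by simp
      qed
      also have "(\<Sum>c\<in>C. a c * (real n * \<eta> + Lc c)) = real n * \<eta> + L"
      proof -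
        have "(\<Sum>c\<in>C. a c * (real n * \<eta> + Lc c)) = (\<Sum>c\<in>C. a c) * (real n * \<eta>) + (\<Sum>c\<in>C. a c * Lc c)"
          by (simp add: distrib_left sum.distrib sum_distrib_right)
        then show ?thesis by (simp add: sum_a L_def)
      qed
      also have "ennreal (1 / \<epsilon>) * ennreal (real n * \<eta> + L) = ennreal ((real n * \<eta> + L) / \<epsilon>)"
        by (subst ennreal_mult[symmetric]) (use eps \<eta> L0 in auto)
      finally show ?thesis .
    qed
    have "ennreal (1 / real n) * Hs_eps M \<epsilon> n \<le> ennreal (1 / real n) *
        (ennreal (real n * (T + \<gamma>) + 2 powr (- (real n * \<delta>)) * real n * K) + ennreal ((real n * \<eta> + L) / \<epsilon>))"
      unfolding split by (intro mult_left_mono add_mono I1 I2) auto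
    also have "\<dots> = ennreal (1 / real n * (real n * (T + \<gamma>) + 2 powr (- (real n * \<delta>)) * real n * K + (real n * \<eta> + L) / \<epsilon>))"
      using T_nonneg g K0 \<eta> L0 eps
      by (simp add: ennreal_mult[symmetric] ennreal_plus[symmetric] del: ennreal_plus)
    also have "\<dots> \<le> ennreal (T + 3 * \<gamma>)"
    proof (rule ennreal_leI)
      have "1 / real n * (real n * (T + \<gamma>) + 2 powr (- (real n * \<delta>)) * real n * K + (real n * \<eta> + L) / \<epsilon>) =
          T + \<gamma> + \<gamma> + (2 powr (- (real n * \<delta>)) * K + L / \<epsilon> * (1 / real n))"
        using n eps by (simp add: \<eta>_def field_simps)
      then show "1 / real n * (real n * (T + \<gamma>) + 2 powr (- (real n * \<delta>)) * real n * K + (real n * \<eta> + L) / \<epsilon>) \<le> T + 3 * \<gamma>"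
        using elim(4) by linarith
    qed
    finally show ?case .
  qed
qed

end

context mixsrc begin

lemma ennreal_le_sub_plus: "0 \<le> d \<Longrightarrow> ennreal t \<le> ennreal (t - d) + ennreal d"
proof (cases "t - d \<ge> 0")
  case True
  assume "0 \<le> d"
  then show ?thesis using True by (simp add: ennreal_plus[symmetric] del: ennreal_plus)
next
  case False
  assume "0 \<le> d"
  then have "ennreal t \<le> ennreal d" using False by (intro ennreal_leI) auto
  then show ?thesis by (simp add: add_increasing)
qed

lemma limsup_eq:
  assumes eps: "0 < \<epsilon>" "\<forall>c\<in>C. 2 * \<epsilon> < a c"
  shows "limsup (\<lambda>n. ennreal (1 / real n) * Hs_eps M \<epsilon> n) = ennreal T"
proof -
  obtain c0 where c0: "c0 \<in> C" using set_pmf_not_empty[of \<alpha>] by blast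
  have eps1: "\<epsilon> < 1" using eps c0 a_le1[of c0] by force
  define f where "f = (\<lambda>n. ennreal (1 / real n) * Hs_eps M \<epsilon> n)"
  have up: "limsup f \<le> ennreal T"
  proof (rule ennreal_le_epsilon)
    fix e :: real assume e: "0 < e"
    have "limsup f \<le> ennreal (T + 3 * (e / 3))"
      unfolding f_def by (rule Limsup_bounded[OF upper_bound[OF eps(1) eps1]]) (use e in auto)
    also have "\<dots> = ennreal T + ennreal e" using T_nonneg e by (simp add: ennreal_plus)
    finally show "limsup f \<le> ennreal T + ennreal e" .
  qed
  have low: "ennreal T \<le> limsup f"
  proof (rule ennreal_le_epsilon)
    fix e :: real assume e: "0 < e"
    have "ennreal (T - 2 * (e / 2)) \<le> liminf f"
      unfolding f_def by (rule Liminf_bounded[OF lower_bound[OF eps]]) (use e in auto)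
    also have "\<dots> \<le> limsup f" by (rule Liminf_le_Limsup) simp
    finally have "ennreal (T - e) \<le> limsup f" by simp
    then have "ennreal (T - e) + ennreal e \<le> limsup f + ennreal e" by (rule add_right_mono)
    moreover have "ennreal T \<le> ennreal (T - e) + ennreal e" using e by (intro ennreal_le_sub_plus) auto
    ultimately show "ennreal T \<le> limsup f + ennreal e" by (rule order_trans[rotated])
  qed
  show ?thesis using up low by (simp add: f_def)
qed

lemma main: "Hs_bar M = ennreal T"
proof -
  define e0 where "e0 = Min (a ` C) / 2"
  have "0 < Min (a ` C)" using finC a_pos set_pmf_not_empty[of \<alpha>] by (subst Min_gr_iff) auto
  then have e0: "0 < e0" unfolding e0_def by simp
  have e0a: "2 * e0 \<le> a c" if "c \<in> C" for c unfolding e0_def using finC that by (simp add: Min_le)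
  have "eventually (\<lambda>\<epsilon>. limsup (\<lambda>n. ennreal (1 / real n) * Hs_eps M \<epsilon> n) = ennreal T) (at_right (0::real))"
    unfolding eventually_at_right_field
  proof (intro exI[of _ e0] conjI allI impI)
    show "0 < e0" by (rule e0)
    fix \<epsilon> :: real assume "0 < \<epsilon>" "\<epsilon> < e0"
    then show "limsup (\<lambda>n. ennreal (1 / real n) * Hs_eps M \<epsilon> n) = ennreal T"
      using e0a by (intro limsup_eq) force+
  qed
  then have "((\<lambda>\<epsilon>. limsup (\<lambda>n. ennreal (1 / real n) * Hs_eps M \<epsilon> n)) \<longlongrightarrow> ennreal T) (at_right (0::real))"
    by (rule tendsto_eventually)
  then show ?thesis unfolding Hs_bar_def by (rule tendsto_Lim[rotated]) simp
qed

end

theorem corollary4: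
  fixes m :: nat and mm :: "nat \<Rightarrow> nat"
    and PX :: "nat \<Rightarrow> nat \<Rightarrow> ('x::countable) list pmf"
    and W :: "nat \<Rightarrow> nat \<Rightarrow> nat \<Rightarrow> 'x list \<Rightarrow> ('y::countable) list pmf"
    and \<alpha> :: "(nat \<times> nat) pmf"
  assumes mm_pos: "\<forall>i<m. 0 < mm i"
    and alpha_supp: "set_pmf \<alpha> = {(i, j). i < m \<and> j < mm i}"
    and PX_len: "\<forall>i<m. \<forall>n. set_pmf (PX i n) \<subseteq> {xs. length xs = n}"
    and PX_pos: "\<forall>i<m. \<forall>n xs. length xs = n \<longrightarrow> pmf (PX i n) xs > 0"
    and W_len: "\<forall>i<m. \<forall>j<mm i. \<forall>n xs. length xs = n \<longrightarrow>
                   set_pmf (W i j n xs) \<subseteq> {ys. length ys = n}"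
    and UI: "\<forall>i<m. \<forall>j<mm i. src_uniformly_integrable (joint_src (PX i) (W i j))"
    and SC: "\<forall>i<m. \<forall>j<mm i. cond_strong_converse (joint_src (PX i) (W i j))"
    and D_pos: "\<forall>i<m. \<forall>k<m. i \<noteq> k \<longrightarrow> D_lower (PX i) (PX k) > 0"
  shows "Hs_bar (\<lambda>n. bind_pmf \<alpha> (\<lambda>(i, j). joint_src (PX i) (W i j) n))
       = ennreal (\<Sum>i<m. (\<Sum>j<mm i. pmf \<alpha> (i, j)) *
            Max {cond_entropy_rate (joint_src (PX i) (W i j)) | j. j < mm i})"
proof -
  interpret mixsrc m mm PX W \<alpha>
    using mm_pos alpha_supp PX_len PX_pos UI SC D_pos by unfold_locales
  have "(\<lambda>n. bind_pmf \<alpha> (\<lambda>(i, j). joint_src (PX i) (W i j) n)) = M"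
    by (rule ext) (simp add: M_def J_def)
  moreover have "T = (\<Sum>i<m. (\<Sum>j<mm i. pmf \<alpha> (i, j)) *
            Max {cond_entropy_rate (joint_src (PX i) (W i j)) | j. j < mm i})"
    by (simp add: T_def ai_def A_def Hc_def Sc_def)
  ultimately show ?thesis using main by simp
qed

end
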